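(* Let $S$ be an open sector with vertex at $0$ whose closure meets the real axis only at $0$, and let $\varepsilon\in S$. (1) One has $e^x(1+\varepsilon x)*e^x(1+\bar\varepsilon x)=e^xV$, where $V=1+(\varepsilon+\bar\varepsilon+\varepsilon\bar\varepsilon)x+\varepsilon\bar\varepsilon x^2$. (2) If $Y$ is a polynomial of degree $p$, then $(e^xY)*(e^xV)=e^xY_1$, where $Y_1$ is a polynomial of degree $p+2$. (3) Suppose $Y$ is a real polynomial of degree $p$ whose roots are: $s^*$ simple negative roots, $t^*$ simple positive roots, $r^*/2$ pairwise distinct pairs of non-real complex conjugate roots, and a root of multiplicity $p-s^*-t^*-r^*$ at $0$. Then one can choose $\varepsilon\in S$ so close to $0$ that the polynomial $Y_1$ (defined by $(e^xY)*(e^xV)=e^xY_1$) has $s^*$ simple negative roots, $t^*$ simple positive roots, $r^*/2+1$ pairwise distinct pairs of non-real complex conjugate roots, and a root of multiplicity $p-s^*-t^*-r^*$ at $0$.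
   Context: Schur–Szegő composition of entire functions: for $f=\sum_{j\ge0}\gamma_jx^j/j!$ and $g=\sum_{j\ge0}\delta_jx^j/j!$ (everywhere convergent series) one sets $f*g=\sum_{j\ge0}\gamma_j\delta_jx^j/j!$; it is commutative and associative. *)

theory Defs
  imports "HOL-Analysis.Analysis" "HOL-Computational_Algebra.Polynomial"
begin

text \<open>Schur-Szego composition of entire functions: if f = sum gamma_j x^j/j! and
  g = sum delta_j x^j/j!, then gamma_j, delta_j are the j-th derivatives at 0 and
  f * g = sum gamma_j delta_j x^j/j!.\<close>
definition ssc :: "(complex \<Rightarrow> complex) \<Rightarrow> (complex \<Rightarrow> complex) \<Rightarrow> complex \<Rightarrow> complex" where
  "ssc f g = (\<lambda>x. \<Sum>j. (deriv ^^ j) f 0 * (deriv ^^ j) g 0 * x ^ j / fact j)"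

definition open_sector :: "real \<Rightarrow> real \<Rightarrow> complex set" where
  "open_sector \<alpha> \<beta> = {complex_of_real r * cis \<theta> | r \<theta>. 0 < r \<and> \<alpha> < \<theta> \<and> \<theta> < \<beta>}"

definition Vpoly :: "complex \<Rightarrow> complex poly" where
  "Vpoly e = [:1, e + cnj e + e * cnj e, e * cnj e:]"

text \<open>Root configuration of a nonzero polynomial: s simple negative roots, t simple
  positive roots, r simple non-real roots (for real polynomials these form r/2
  pairwise distinct conjugate pairs), and a root of multiplicity m at 0.\<close>
definition root_config :: "complex poly \<Rightarrow> nat \<Rightarrow> nat \<Rightarrow> nat \<Rightarrow> nat \<Rightarrow> bool" where
  "root_config P s t r m \<longleftrightarrow> P \<noteq> 0 \<and>
     card {z. z \<in> \<real> \<and> Re z < 0 \<and> poly P z = 0} = s \<and>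
     card {z. z \<in> \<real> \<and> Re z > 0 \<and> poly P z = 0} = t \<and>
     card {z. z \<notin> \<real> \<and> poly P z = 0} = r \<and>
     (\<forall>z. z \<noteq> 0 \<and> poly P z = 0 \<longrightarrow> order z P = 1) \<and>
     order 0 P = m"

end

theory Submission
  imports Defs "HOL-Complex_Analysis.Complex_Analysis" "HOL-Computational_Algebra.Fundamental_Theorem_Algebra"
begin


definition EE :: "complex poly \<Rightarrow> complex poly" where
  "EE Q = Q + pderiv Q"

definition dd :: "complex poly \<Rightarrow> nat \<Rightarrow> complex" where
  "dd P j = poly ((EE ^^ j) P) 0"

lemma deriv_exp_poly:
  "deriv (\<lambda>x. exp x * poly Q x) = (\<lambda>x. exp x * poly (EE Q) x)"
proof
  fix x :: complex
  have "((\<lambda>x. exp x * poly Q x) has_field_derivative (exp x * poly Q x + exp x * poly (pderiv Q) x)) (at x)"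
    by (auto intro!: derivative_eq_intros)
  then show "deriv (\<lambda>x. exp x * poly Q x) x = exp x * poly (EE Q) x"
    by (simp add: DERIV_imp_deriv EE_def algebra_simps)
qed

lemma derivs_exp_poly:
  "(deriv ^^ j) (\<lambda>x. exp x * poly Q x) = (\<lambda>x. exp x * poly ((EE ^^ j) Q) x)"
  by (induction j) (simp_all add: deriv_exp_poly)

lemma holo_exp_poly: "(\<lambda>x. exp x * poly Q x) holomorphic_on A"
proof -
  have "\<And>x. ((\<lambda>x. exp x * poly Q x) has_field_derivative (exp x * poly Q x + exp x * poly (pderiv Q) x)) (at x)"
    by (auto intro!: derivative_eq_intros)
  then show ?thesis
    unfolding holomorphic_on_def field_differentiable_def
    by (meson has_field_derivative_at_within)
qed

lemma exp_poly_series: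
  "(\<lambda>n. dd R n * x ^ n / fact n) sums (exp x * poly R x)"
proof -
  have "((\<lambda>n. (deriv ^^ n) (\<lambda>x. exp x * poly R x) 0 / (fact n) * (x-0)^n) sums (exp x * poly R x))"
    using holomorphic_power_series[OF holo_exp_poly[of R "ball 0 (norm x + 1)"], of x] by simp
  then show ?thesis by (simp add: derivs_exp_poly dd_def)
qed

lemma ssc_exp_poly:
  assumes "\<And>j. dd R j = dd P j * dd Q j"
  shows "ssc (\<lambda>x. exp x * poly P x) (\<lambda>x. exp x * poly Q x) = (\<lambda>x. exp x * poly R x)"
proof
  fix x
  have "ssc (\<lambda>x. exp x * poly P x) (\<lambda>x. exp x * poly Q x) x = (\<Sum>n. dd R n * x ^ n / fact n)"
    unfolding ssc_def derivs_exp_poly dd_def[symmetric] using assms by simp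
  also have "\<dots> = exp x * poly R x" using exp_poly_series sums_unique by metis
  finally show "ssc (\<lambda>x. exp x * poly P x) (\<lambda>x. exp x * poly Q x) x = exp x * poly R x" .
qed

lemma EE_add: "EE (P + Q) = EE P + EE Q"
  by (simp add: EE_def pderiv_add)
lemma EE_smult: "EE (smult c P) = smult c (EE P)"
  by (simp add: EE_def pderiv_smult smult_add_right)
lemma EEpow_add: "(EE ^^ j) (P + Q) = (EE ^^ j) P + (EE ^^ j) Q"
  by (induction j) (simp_all add: EE_add)
lemma EEpow_smult: "(EE ^^ j) (smult c P) = smult c ((EE ^^ j) P)"
  by (induction j) (simp_all add: EE_smult)
lemma EE_pCons0: "EE (pCons 0 W) = pCons 0 (EE W) + W"
  by (simp add: EE_def pderiv_pCons)

lemma EEpow_pCons0: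
  "(EE ^^ Suc j) (pCons 0 W) = pCons 0 ((EE ^^ Suc j) W) + smult (of_nat (Suc j)) ((EE ^^ j) W)"
proof (induction j)
  case 0
  then show ?case by (simp add: EE_pCons0)
next
  case (Suc j)
  have "(EE ^^ Suc (Suc j)) (pCons 0 W) = EE ((EE ^^ Suc j) (pCons 0 W))"
    by (simp only: funpow.simps(2) comp_apply)
  also have "\<dots> = EE (pCons 0 ((EE ^^ Suc j) W) + smult (of_nat (Suc j)) ((EE ^^ j) W))"
    by (simp only: Suc)
  also have "\<dots> = pCons 0 (EE ((EE ^^ Suc j) W)) + (EE ^^ Suc j) W + smult (of_nat (Suc j)) (EE ((EE ^^ j) W))"
    by (simp only: EE_add EE_pCons0 EE_smult)
  also have "\<dots> = pCons 0 ((EE ^^ Suc (Suc j)) W) + (EE ^^ Suc j) W + smult (of_nat (Suc j)) ((EE ^^ Suc j) W)"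
    by (simp only: funpow.simps(2) comp_apply)
  also have "\<dots> = pCons 0 ((EE ^^ Suc (Suc j)) W) + smult (of_nat (Suc (Suc j))) ((EE ^^ Suc j) W)"
  proof -
    have "\<And>X::complex poly. X + smult (of_nat (Suc j)) X = smult (of_nat (Suc (Suc j))) X"
      by (metis add.commute of_nat_Suc smult_1_left smult_add_left)
    then show ?thesis by (simp only: add.assoc)
  qed
  finally show ?case .
qed

lemma dd_add: "dd (P + Q) j = dd P j + dd Q j"
  by (simp add: dd_def EEpow_add)
lemma dd_smult: "dd (smult c P) j = c * dd P j"
  by (simp add: dd_def EEpow_smult)
lemma dd_EE: "dd (EE P) j = dd P (Suc j)"
  by (simp add: dd_def funpow_Suc_right del: funpow.simps)
lemma dd_pCons0: "dd (pCons 0 W) j = of_nat j * dd W (j - 1)"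
proof (cases j)
  case 0 then show ?thesis by (simp add: dd_def)
next
  case (Suc k) then show ?thesis by (simp add: dd_def EEpow_pCons0 del: funpow.simps)
qed

lemma EEpow_lin: "(EE ^^ j) [:u, v:] = [:u + of_nat j * v, v:]"
  by (induction j arbitrary: u) (simp_all add: EE_def pderiv_pCons algebra_simps)

lemma EEpow_quad: "(EE ^^ j) [:u, v, w:] = [:u + of_nat j * v + of_nat j * (of_nat j - 1) * w, v + 2 * of_nat j * w, w:]"
  by (induction j) (simp_all add: EE_def pderiv_pCons algebra_simps)

lemma dd_lin: "dd [:u, v:] j = u + of_nat j * v"
  by (simp add: dd_def EEpow_lin)

lemma dd_V: "dd (Vpoly e) j = 1 + of_nat j * (e + cnj e + e * cnj e) + of_nat j * (of_nat j - 1) * (e * cnj e)"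
  by (simp add: dd_def Vpoly_def EEpow_quad)

definition Y1of :: "complex poly \<Rightarrow> complex \<Rightarrow> complex \<Rightarrow> complex poly" where
  "Y1of Y a b = Y + smult a (pCons 0 (EE Y)) + smult b (pCons 0 (pCons 0 (EE (EE Y))))"

lemma dd_Y1of: "dd (Y1of Y a b) j = dd Y j * (1 + of_nat j * a + of_nat j * (of_nat j - 1) * b)"
proof -
  have "dd (Y1of Y a b) j = dd Y j + a * (of_nat j * dd Y j) + b * (of_nat j * (of_nat (j - 1) * dd Y j))"
  proof (cases j)
    case 0 then show ?thesis by (simp add: Y1of_def dd_add dd_smult dd_pCons0)
  next
    case (Suc k)
    then show ?thesis
    proof (cases k)
      case 0 with Suc show ?thesis by (simp add: Y1of_def dd_add dd_smult dd_pCons0 dd_EE)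
    next
      case (Suc l) with \<open>j = Suc k\<close> show ?thesis
        by (simp add: Y1of_def dd_add dd_smult dd_pCons0 dd_EE)
    qed
  qed
  also have "\<dots> = dd Y j * (1 + of_nat j * a + of_nat j * (of_nat j - 1) * b)"
    by (cases j) (simp_all add: algebra_simps)
  finally show ?thesis .
qed

lemma ssc_V: "ssc (\<lambda>x. exp x * poly Y x) (\<lambda>x. exp x * poly (Vpoly e) x)
   = (\<lambda>x. exp x * poly (Y1of Y (e + cnj e + e * cnj e) (e * cnj e)) x)"
  by (rule ssc_exp_poly) (simp add: dd_Y1of dd_V)

lemma part1: "ssc (\<lambda>x. exp x * (1 + e * x)) (\<lambda>x. exp x * (1 + cnj e * x))
               = (\<lambda>x. exp x * poly (Vpoly e) x)"
proof -
  have "ssc (\<lambda>x. exp x * poly [:1, e:] x) (\<lambda>x. exp x * poly [:1, cnj e:] x) = (\<lambda>x. exp x * poly (Vpoly e) x)"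
    by (rule ssc_exp_poly) (simp add: dd_V dd_lin algebra_simps)
  then show ?thesis by (simp add: mult.commute)
qed

lemma degree_EE: "degree (EE Y) = degree Y" and lead_EE: "coeff (EE Y) (degree Y) = coeff Y (degree Y)"
proof -
  have c: "coeff (EE Y) n = coeff Y n + of_nat (Suc n) * coeff Y (Suc n)" for n
    by (simp add: EE_def coeff_pderiv algebra_simps)
  show l: "coeff (EE Y) (degree Y) = coeff Y (degree Y)"
    by (simp add: c coeff_eq_0)
  show "degree (EE Y) = degree Y"
  proof (cases "Y = 0")
    case True then show ?thesis by (simp add: EE_def)
  next
    case False
    show ?thesis
    proof (rule antisym)
      show "degree (EE Y) \<le> degree Y" by (rule degree_le) (simp add: c coeff_eq_0)
      show "degree Y \<le> degree (EE Y)" by (rule le_degree) (simp add: l False)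
    qed
  qed
qed

lemma degree_Y1of:
  assumes "Y \<noteq> 0" "b \<noteq> 0"
  shows "degree (Y1of Y a b) = degree Y + 2"
proof -
  let ?p = "degree Y"
  have dE: "degree (EE (EE Y)) = ?p" "degree (EE Y) = ?p" by (simp_all add: degree_EE)
  have cE: "coeff (EE (EE Y)) ?p = lead_coeff Y" using lead_EE[of "EE Y"] lead_EE[of Y] by (simp add: degree_EE)
  have c: "coeff (Y1of Y a b) n = coeff Y n + a * coeff (pCons 0 (EE Y)) n + b * coeff (pCons 0 (pCons 0 (EE (EE Y)))) n" for n
    by (simp add: Y1of_def coeff_pCons split: nat.split)
  show ?thesis
  proof (rule antisym)
    show "degree (Y1of Y a b) \<le> ?p + 2"
    proof (rule degree_le, intro allI impI)
      fix n assume "?p + 2 < n"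
      then obtain k where k: "n = Suc (Suc k)" "?p < k" by (metis Suc_lessE add_2_eq_Suc' less_Suc_eq_0_disj)
      then show "coeff (Y1of Y a b) n = 0"
        by (simp add: c coeff_eq_0 dE)
    qed
    show "?p + 2 \<le> degree (Y1of Y a b)"
    proof (rule le_degree)
      have "coeff (Y1of Y a b) (?p + 2) = b * lead_coeff Y"
        by (simp add: c coeff_eq_0 dE cE)
      then show "coeff (Y1of Y a b) (?p + 2) \<noteq> 0" using assms by simp
    qed
  qed
qed



lemma poly_bound_cball:
  fixes P :: "complex poly"
  shows "\<exists>M>0. \<forall>z\<in>cball 0 R. norm (poly P z) \<le> M"
proof -
  have "compact (poly P ` cball 0 R)"
    by (intro compact_continuous_image continuous_intros) auto
  then have "bounded (poly P ` cball 0 R)" by (rule compact_imp_bounded)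
  then show ?thesis unfolding bounded_pos by auto
qed

lemma poly_sum_le:
  fixes P :: "complex poly"
  assumes "degree P \<le> n"
  shows "poly P z = (\<Sum>i\<le>n. coeff P i * z ^ i)"
proof -
  have "poly P z = (\<Sum>i\<le>degree P. coeff P i * z ^ i)" by (rule poly_altdef)
  also have "\<dots> = (\<Sum>i\<le>n. coeff P i * z ^ i)"
    by (rule sum.mono_neutral_left) (use assms in \<open>auto simp: coeff_eq_0\<close>)
  finally show ?thesis .
qed

lemma poly_upper:
  fixes P :: "complex poly"
  assumes "degree P \<le> n" "norm z \<ge> 1"
  shows "norm (poly P z) \<le> (\<Sum>i\<le>n. norm (coeff P i)) * norm z ^ n"
proof -
  have "norm (poly P z) \<le> (\<Sum>i\<le>n. norm (coeff P i * z ^ i))"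
    unfolding poly_sum_le[OF assms(1)] by (rule norm_sum)
  also have "\<dots> \<le> (\<Sum>i\<le>n. norm (coeff P i) * norm z ^ n)"
  proof (rule sum_mono)
    fix i assume "i \<in> {..n}"
    then have "norm z ^ i \<le> norm z ^ n" using assms(2) by (intro power_increasing) auto
    then show "norm (coeff P i * z ^ i) \<le> norm (coeff P i) * norm z ^ n"
      by (simp add: norm_mult norm_power mult_left_mono)
  qed
  also have "\<dots> = (\<Sum>i\<le>n. norm (coeff P i)) * norm z ^ n" by (simp add: sum_distrib_right)
  finally show ?thesis .
qed

lemma poly_lower:
  fixes P :: "complex poly"
  assumes "P \<noteq> 0"
  shows "\<exists>R\<ge>1. \<forall>z. norm z \<ge> R \<longrightarrow> norm (poly P z) \<ge> norm (lead_coeff P) / 2 * norm z ^ degree P"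
proof -
  let ?d = "degree P" and ?c = "lead_coeff P"
  define C where "C = (\<Sum>i<?d. norm (coeff P i))"
  have C0: "C \<ge> 0" unfolding C_def by (intro sum_nonneg) auto
  have lc: "norm ?c > 0" using assms by simp
  define R where "R = max 1 (2 * C / norm ?c)"
  have "R \<ge> 1" by (simp add: R_def)
  moreover have "norm (poly P z) \<ge> norm ?c / 2 * norm z ^ ?d" if z: "norm z \<ge> R" for z
  proof -
    have z1: "norm z \<ge> 1" using z by (simp add: R_def)
    have zC: "2 * C \<le> norm ?c * norm z" using z lc by (simp add: R_def field_simps)
    have split: "poly P z = ?c * z ^ ?d + (\<Sum>i<?d. coeff P i * z ^ i)"
      by (simp add: poly_altdef lessThan_Suc_atMost[symmetric] add.commute)
    have "norm (\<Sum>i<?d. coeff P i * z ^ i) \<le> (\<Sum>i<?d. norm (coeff P i) * (norm z ^ ?d / norm z))"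
    proof (rule order_trans[OF norm_sum sum_mono])
      fix i assume "i \<in> {..<?d}"
      then have "norm z ^ Suc i \<le> norm z ^ ?d" using z1 by (intro power_increasing) auto
      moreover have "0 < norm z" using z1 by linarith
      ultimately have "norm z ^ i \<le> norm z ^ ?d / norm z" by (simp add: pos_le_divide_eq mult.commute)
      from mult_left_mono[OF this, of "norm (coeff P i)"]
      show "norm (coeff P i * z ^ i) \<le> norm (coeff P i) * (norm z ^ ?d / norm z)"
        by (simp add: norm_mult norm_power)
    qed
    also have "\<dots> = C * norm z ^ ?d / norm z" by (simp add: C_def sum_distrib_right sum_divide_distrib)
    also have "\<dots> \<le> norm ?c / 2 * norm z ^ ?d"
    proof -
      have "C * norm z ^ ?d \<le> (norm ?c * norm z / 2) * norm z ^ ?d"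
        using zC by (intro mult_right_mono) auto
      moreover have zp: "0 < norm z" using z1 by linarith
      ultimately show ?thesis by (simp add: pos_divide_le_eq[OF zp] mult.commute mult.left_commute)
    qed
    finally have r: "norm (\<Sum>i<?d. coeff P i * z ^ i) \<le> norm ?c / 2 * norm z ^ ?d" .
    have "norm (?c * z ^ ?d) \<le> norm (poly P z) + norm (\<Sum>i<?d. coeff P i * z ^ i)"
      unfolding split by (metis add_diff_cancel_right' norm_triangle_ineq4 order_refl add.commute
          norm_minus_commute norm_triangle_ineq2 order_trans)
    then show ?thesis using r by (simp add: norm_mult norm_power)
  qed
  ultimately show ?thesis by blast
qed

lemma sector_bound:
  assumes S_def: "S = open_sector \<alpha> \<beta>" and ab: "\<alpha> < \<beta>" and clos: "closure S \<inter> \<real> = {0}"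
  shows "\<exists>\<sigma>>0. \<forall>e\<in>S. e \<noteq> 0 \<and> \<sigma> * norm e \<le> \<bar>Im e\<bar>"
proof -
  have sub: "cis ` {\<alpha><..<\<beta>} \<subseteq> closure S"
  proof
    fix z assume "z \<in> cis ` {\<alpha><..<\<beta>}"
    then obtain \<theta> where "z = cis \<theta>" "\<alpha> < \<theta>" "\<theta> < \<beta>" by auto
    then have "z \<in> S" unfolding S_def open_sector_def by (intro CollectI exI[of _ 1] exI[of _ \<theta>]) auto
    then show "z \<in> closure S" by (rule closure_subset[THEN subsetD])
  qed
  have "cis ` closure {\<alpha><..<\<beta>} \<subseteq> closure S"
    by (rule image_closure_subset[OF _ _ sub]) (auto intro!: continuous_intros)
  then have cl: "cis \<theta> \<in> closure S" if "\<theta> \<in> {\<alpha>..\<beta>}" for \<theta> using ab that by auto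
  have sinnz: "sin \<theta> \<noteq> 0" if "\<theta> \<in> {\<alpha>..\<beta>}" for \<theta>
  proof
    assume "sin \<theta> = 0"
    then have "cis \<theta> = of_real (cos \<theta>)" by (simp add: complex_eq_iff)
    then have "cis \<theta> \<in> \<real>" by simp
    with cl[OF that] clos have "cis \<theta> = 0" by blast
    then show False by simp
  qed
  have cont: "continuous_on {\<alpha>..\<beta>} (\<lambda>\<theta>. \<bar>sin \<theta>\<bar>)" by (intro continuous_intros)
  obtain \<theta>0 where t0: "\<theta>0 \<in> {\<alpha>..\<beta>}" "\<forall>\<theta>\<in>{\<alpha>..\<beta>}. \<bar>sin \<theta>0\<bar> \<le> \<bar>sin \<theta>\<bar>"
    using continuous_attains_inf[OF compact_Icc _ cont] ab by auto
  have pos: "\<bar>sin \<theta>0\<bar> > 0" using sinnz[OF t0(1)] by simp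
  show ?thesis
  proof (intro exI[of _ "\<bar>sin \<theta>0\<bar>"] conjI[OF pos] ballI)
    fix e assume "e \<in> S"
    then obtain r \<theta> where e: "e = complex_of_real r * cis \<theta>" "0 < r" "\<alpha> < \<theta>" "\<theta> < \<beta>"
      unfolding S_def open_sector_def by auto
    have ne: "norm e = r" using e by (simp add: norm_mult)
    have im: "Im e = r * sin \<theta>" using e by simp
    have "\<bar>sin \<theta>0\<bar> \<le> \<bar>sin \<theta>\<bar>" using t0(2) e by auto
    then have "\<bar>sin \<theta>0\<bar> * r \<le> \<bar>sin \<theta>\<bar> * r" using e(2) by (intro mult_right_mono) auto
    then show "e \<noteq> 0 \<and> \<bar>sin \<theta>0\<bar> * norm e \<le> \<bar>Im e\<bar>"
      using e ne im by (auto simp: abs_mult mult.commute)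
  qed
qed



lemma far_key:
  fixes u w t K \<sigma> \<epsilon> :: real
  assumes eps: "\<epsilon> > 0" "\<epsilon>\<^sup>2 = u\<^sup>2 + w\<^sup>2" "\<epsilon> \<le> 1"
    and sig: "\<sigma> > 0" "\<sigma> * \<epsilon> \<le> \<bar>w\<bar>" and K: "K \<ge> 0" and small: "\<epsilon> * (1 + 10 * K) < \<sigma>\<^sup>2"
  shows "\<epsilon>\<^sup>2 * \<bar>t\<bar> * (1 + 2 * K) + 4 * K * \<epsilon> < (1 + u * t)\<^sup>2 + w\<^sup>2 * t\<^sup>2"
proof -
  define Q where "Q = (1 + u * t)\<^sup>2 + w\<^sup>2 * t\<^sup>2"
  have h1: "\<epsilon>\<^sup>2 * Q - w\<^sup>2 = (u * (1 + u * t) + w\<^sup>2 * t)\<^sup>2"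
    unfolding Q_def eps(2) by (simp add: power2_eq_square algebra_simps)
  have sw: "(\<sigma> * \<epsilon>)\<^sup>2 \<le> w\<^sup>2"
    using sig eps by (metis abs_of_nonneg less_imp_le mult_nonneg_nonneg power2_abs power_mono)
  have "\<epsilon>\<^sup>2 * \<sigma>\<^sup>2 \<le> \<epsilon>\<^sup>2 * Q" using h1 sw by (simp add: power_mult_distrib mult.commute) (smt (verit) zero_le_power2)
  then have h2: "\<sigma>\<^sup>2 \<le> Q" using eps(1) by simp
  have "w\<^sup>2 * t\<^sup>2 \<le> Q" unfolding Q_def by simp
  moreover have "(\<sigma> * \<epsilon>)\<^sup>2 * t\<^sup>2 \<le> w\<^sup>2 * t\<^sup>2" using sw by (simp add: mult_right_mono)
  ultimately have h3: "\<sigma>\<^sup>2 * (\<epsilon>\<^sup>2 * t\<^sup>2) \<le> Q" by (simp add: power_mult_distrib mult.assoc)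
  have h4: "\<epsilon> * \<bar>t\<bar> \<le> (1 + \<epsilon>\<^sup>2 * t\<^sup>2) / 2"
  proof -
    have "0 \<le> (1 - \<epsilon> * \<bar>t\<bar>)\<^sup>2" by simp
    then show ?thesis by (simp add: power2_eq_square algebra_simps abs_mult_self_eq)
  qed
  define L where "L = 1 + \<epsilon>\<^sup>2 * t\<^sup>2"
  have L1: "L \<ge> 1" unfolding L_def by simp
  have "\<epsilon>\<^sup>2 * \<bar>t\<bar> * (1 + 2 * K) = \<epsilon> * (\<epsilon> * \<bar>t\<bar>) * (1 + 2 * K)" by (simp add: power2_eq_square)
  also have "\<dots> \<le> \<epsilon> * (L / 2) * (1 + 2 * K)"
    using h4 eps K unfolding L_def by (intro mult_right_mono mult_left_mono) auto
  finally have a: "\<epsilon>\<^sup>2 * \<bar>t\<bar> * (1 + 2 * K) \<le> \<epsilon> * (L / 2) * (1 + 2 * K)" .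
  have "4 * K * \<epsilon> * 1 \<le> 4 * K * \<epsilon> * L" by (rule mult_left_mono) (use L1 K eps in auto)
  then have b: "4 * K * \<epsilon> \<le> 4 * K * \<epsilon> * L" by simp
  have "\<epsilon> * (L / 2) * (1 + 2 * K) + 4 * K * \<epsilon> * L = (\<epsilon> * (1 + 10 * K)) * (L / 2)" by (simp add: algebra_simps)
  also have "\<dots> < \<sigma>\<^sup>2 * (L / 2)" using small L1 by (intro mult_strict_right_mono) auto
  also have "\<dots> \<le> Q" using h2 h3 unfolding L_def by (simp add: algebra_simps)
  finally show ?thesis using a b unfolding Q_def by linarith
qed

lemma Y1of_poly_expand:
  "poly (Y1of Y a b) x = poly Y x * (1 + a * x + b * x\<^sup>2) + a * (x * poly (pderiv Y) x)
     + 2 * b * x * (x * poly (pderiv Y) x) + b * (x\<^sup>2 * poly (pderiv (pderiv Y)) x)"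
  by (simp add: Y1of_def EE_def pderiv_add power2_eq_square algebra_simps)

lemma far_nonzero:
  fixes Y :: "complex poly" and e :: complex and t K \<sigma> :: real
  defines "x \<equiv> complex_of_real t"
  assumes y: "poly Y x \<noteq> 0"
    and b1: "norm (x * poly (pderiv Y) x) \<le> K * norm (poly Y x)"
    and b2: "norm (x\<^sup>2 * poly (pderiv (pderiv Y)) x) \<le> K * norm (poly Y x)"
    and e: "e \<noteq> 0" "norm e \<le> 1" and sig: "\<sigma> > 0" "\<sigma> * norm e \<le> \<bar>Im e\<bar>"
    and K: "K \<ge> 0" and small: "norm e * (1 + 10 * K) < \<sigma>\<^sup>2"
  shows "poly (Y1of Y (e + cnj e + e * cnj e) (e * cnj e)) x \<noteq> 0"
proof -
  define \<epsilon> where "\<epsilon> = norm e"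
  define u where "u = Re e"
  define w where "w = Im e"
  have eps: "\<epsilon> > 0" "\<epsilon>\<^sup>2 = u\<^sup>2 + w\<^sup>2" "\<epsilon> \<le> 1"
    using e by (auto simp: \<epsilon>_def u_def w_def cmod_power2)
  have ue: "\<bar>u\<bar> \<le> \<epsilon>" unfolding u_def \<epsilon>_def by (rule abs_Re_le_cmod)
  have "\<epsilon> * \<epsilon> \<le> \<epsilon> * 1" by (rule mult_left_mono) (use eps in auto)
  then have ee: "\<epsilon>\<^sup>2 \<le> \<epsilon>" by (simp add: power2_eq_square)
  have a: "e + cnj e + e * cnj e = of_real (2 * u + \<epsilon>\<^sup>2)"
    by (simp add: complex_add_cnj complex_norm_square[symmetric] u_def \<epsilon>_def)
  have b: "e * cnj e = of_real (\<epsilon>\<^sup>2)" by (simp add: complex_norm_square[symmetric] \<epsilon>_def)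
  define y where "y = poly Y x"
  define v1 where "v1 = x * poly (pderiv Y) x"
  define v2 where "v2 = x\<^sup>2 * poly (pderiv (pderiv Y)) x"
  define Q where "Q = (1 + u * t)\<^sup>2 + w\<^sup>2 * t\<^sup>2"
  define rest where "rest = y * of_real (\<epsilon>\<^sup>2 * t) + of_real (2 * u + \<epsilon>\<^sup>2) * v1 + 2 * of_real (\<epsilon>\<^sup>2) * x * v1 + of_real (\<epsilon>\<^sup>2) * v2"
  have F: "poly (Y1of Y (e + cnj e + e * cnj e) (e * cnj e)) x = y * of_real Q + rest"
  proof -
    have q: "1 + (2 * u + \<epsilon>\<^sup>2) * t + \<epsilon>\<^sup>2 * t\<^sup>2 = Q + \<epsilon>\<^sup>2 * t"
    proof -
      have "\<epsilon>\<^sup>2 * t\<^sup>2 = (u\<^sup>2 + w\<^sup>2) * t\<^sup>2" using eps(2) by simp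
      then show ?thesis unfolding Q_def by (simp add: power2_eq_square algebra_simps)
    qed
    have "poly (Y1of Y (e + cnj e + e * cnj e) (e * cnj e)) x =
       y * of_real (1 + (2 * u + \<epsilon>\<^sup>2) * t + \<epsilon>\<^sup>2 * t\<^sup>2) + of_real (2 * u + \<epsilon>\<^sup>2) * v1 + 2 * of_real (\<epsilon>\<^sup>2) * x * v1 + of_real (\<epsilon>\<^sup>2) * v2"
      unfolding Y1of_poly_expand a unfolding b y_def v1_def v2_def by (simp add: x_def power2_eq_square algebra_simps)
    then show ?thesis unfolding q rest_def by (simp add: algebra_simps)
  qed
  have ny: "norm y > 0" using y by (simp add: y_def)
  have nv1: "norm v1 \<le> K * norm y" using b1 by (simp add: v1_def y_def)
  have nv2: "norm v2 \<le> K * norm y" using b2 by (simp add: v2_def y_def)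
  have nx: "norm x = \<bar>t\<bar>" by (simp add: x_def)
  have "norm rest \<le> norm y * (\<epsilon>\<^sup>2 * \<bar>t\<bar>) + \<bar>2 * u + \<epsilon>\<^sup>2\<bar> * norm v1 + 2 * \<epsilon>\<^sup>2 * \<bar>t\<bar> * norm v1 + \<epsilon>\<^sup>2 * norm v2"
    unfolding rest_def
    by (intro order_trans[OF norm_triangle_ineq] add_mono order_refl)
       (auto simp: norm_mult nx abs_mult simp del: of_real_add of_real_power of_real_mult)
  also have "\<dots> \<le> norm y * (\<epsilon>\<^sup>2 * \<bar>t\<bar>) + (3 * \<epsilon>) * (K * norm y) + 2 * \<epsilon>\<^sup>2 * \<bar>t\<bar> * (K * norm y) + \<epsilon>\<^sup>2 * (K * norm y)"
  proof (intro add_mono order_refl mult_mono nv1 nv2 mult_left_mono)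
    show "\<bar>2 * u + \<epsilon>\<^sup>2\<bar> \<le> 3 * \<epsilon>" using ue ee zero_le_power2[of \<epsilon>] unfolding abs_le_iff by linarith
  qed (use K ny eps in auto)
  also have "\<dots> \<le> norm y * (\<epsilon>\<^sup>2 * \<bar>t\<bar> * (1 + 2 * K) + 4 * K * \<epsilon>)"
  proof -
    have "\<epsilon>\<^sup>2 * (K * norm y) \<le> \<epsilon> * (K * norm y)" using ee K ny by (intro mult_right_mono) auto
    then show ?thesis by (simp add: algebra_simps)
  qed
  also have "\<dots> < norm y * Q"
    using far_key[OF eps sig(1) _ K, of t] sig(2) small ny unfolding Q_def \<epsilon>_def w_def
    by (intro mult_strict_left_mono) (auto simp: \<epsilon>_def w_def)
  finally have rl: "norm rest < norm y * Q" .
  have Q0: "Q \<ge> 0" unfolding Q_def by simp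
  have "norm (y * of_real Q) = norm y * Q" using Q0 by (simp add: norm_mult)
  then have "norm (y * of_real Q + rest) > 0"
    using rl norm_triangle_ineq2[of "y * of_real Q" "- rest"] by (smt (verit) norm_minus_cancel diff_minus_eq_add)
  then show ?thesis using F by auto
qed



abbreviation XX :: "complex poly" where "XX \<equiv> [:0, 1:]"

definition TT :: "complex poly \<Rightarrow> complex poly" where "TT W = XX * EE W"
definition SS :: "complex poly \<Rightarrow> complex poly" where "SS W = XX * XX * EE (EE W)"

lemma EE_X: "EE (XX * W) = XX * EE W + W"
  using EE_pCons0[of W] by simp

declare mult_pCons_left[simp del] mult_pCons_right[simp del]

lemma EE_add': "EE (A + B) = EE A + EE B" by (rule EE_add)

lemma EE_mult_const: "EE (of_nat k * W) = of_nat k * EE W"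
  using EE_smult[of "of_nat k" W] by (simp add: of_nat_poly mult_pCons_left)

lemma TT_X: "TT (XX * W) = XX * (TT W + W)"
  unfolding TT_def EE_X by (simp add: algebra_simps)

lemma ring_aux0:
  fixes X A B :: "'a::comm_ring_1"
  shows "X * X * (X * A + 2 * B) = X * (X * X * A + 2 * (X * B))"
  by (simp add: algebra_simps)

lemma SS_X: "SS (XX * W) = XX * (SS W + 2 * TT W)"
proof -
  have "EE (EE (XX * W)) = XX * EE (EE W) + EE W + EE W"
    by (simp only: EE_X EE_add add.assoc)
  also have "\<dots> = XX * EE (EE W) + 2 * EE W" by (simp only: mult_2 add.assoc)
  finally have e: "EE (EE (XX * W)) = XX * EE (EE W) + 2 * EE W" .
  show ?thesis unfolding SS_def TT_def e by (rule ring_aux0)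
qed

lemma ring_aux1:
  fixes X M T Z :: "'a::comm_ring_1"
  shows "X * (M * (T + of_nat m * Z) + M * Z) = (X * M) * (T + of_nat (Suc m) * Z)"
  by (simp add: algebra_simps)

lemma ring_aux2:
  fixes X M S T Z :: "'a::comm_ring_1"
  shows "X * (M * (S + 2 * of_nat m * T + of_nat m * (of_nat m - 1) * Z) + 2 * (M * (T + of_nat m * Z)))
     = (X * M) * (S + 2 * of_nat (Suc m) * T + of_nat (Suc m) * (of_nat (Suc m) - 1) * Z)"
  by (simp add: algebra_simps)

lemma ring_aux3:
  fixes M Z U V a b :: "'a::comm_ring_1"
  shows "M * Z + a * (M * U) + b * (M * V) = M * (Z + a * U + b * V)"
  by (simp add: algebra_simps)

lemma TT_pow: "TT (XX ^ m * Z) = XX ^ m * (TT Z + of_nat m * Z)"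
proof (induction m)
  case 0 then show ?case by simp
next
  case (Suc m)
  have "TT (XX ^ Suc m * Z) = TT (XX * (XX ^ m * Z))" by (simp add: mult.assoc)
  also have "\<dots> = XX * (XX ^ m * (TT Z + of_nat m * Z) + XX ^ m * Z)" by (simp add: TT_X Suc)
  also have "\<dots> = XX ^ Suc m * (TT Z + of_nat (Suc m) * Z)" by (simp only: ring_aux1 power_Suc)
  finally show ?case .
qed

lemma SS_pow: "SS (XX ^ m * Z) = XX ^ m * (SS Z + 2 * of_nat m * TT Z + of_nat m * (of_nat m - 1) * Z)"
proof (induction m)
  case 0 then show ?case by simp
next
  case (Suc m)
  have "SS (XX ^ Suc m * Z) = SS (XX * (XX ^ m * Z))" by (simp add: mult.assoc)
  also have "\<dots> = XX * (XX ^ m * (SS Z + 2 * of_nat m * TT Z + of_nat m * (of_nat m - 1) * Z)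
       + 2 * (XX ^ m * (TT Z + of_nat m * Z)))" by (simp add: SS_X Suc TT_pow)
  also have "\<dots> = XX ^ Suc m * (SS Z + 2 * of_nat (Suc m) * TT Z + of_nat (Suc m) * (of_nat (Suc m) - 1) * Z)"
    by (simp only: ring_aux2 power_Suc)
  finally show ?case .
qed

lemma Y1of_TS: "Y1of Y a b = Y + [:a:] * TT Y + [:b:] * SS Y"
  by (simp add: Y1of_def TT_def SS_def mult_pCons_left)

definition AA :: "nat \<Rightarrow> complex poly \<Rightarrow> complex poly" where
  "AA m Z = TT Z + of_nat m * Z"
definition BB :: "nat \<Rightarrow> complex poly \<Rightarrow> complex poly" where
  "BB m Z = SS Z + 2 * of_nat m * TT Z + of_nat m * (of_nat m - 1) * Z"
definition Z1of :: "nat \<Rightarrow> complex poly \<Rightarrow> complex \<Rightarrow> complex \<Rightarrow> complex poly" where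
  "Z1of m Z a b = Z + [:a:] * AA m Z + [:b:] * BB m Z"

lemma Y1of_decomp: "Y1of (XX ^ m * Z) a b = XX ^ m * Z1of m Z a b"
  unfolding Y1of_TS TT_pow SS_pow Z1of_def AA_def BB_def by (rule ring_aux3)

lemma Z1of_0: "poly (Z1of m Z a b) 0 = poly Z 0 * (1 + a * of_nat m + b * (of_nat m * (of_nat m - 1)))"
  by (simp add: Z1of_def AA_def BB_def TT_def SS_def algebra_simps of_nat_poly)

lemma sum_order_degree:
  fixes P :: "complex poly"
  assumes "P \<noteq> 0"
  shows "(\<Sum>z\<in>{z. poly P z = 0}. order z P) = degree P"
proof -
  have "degree P = size (proots P)" by (simp add: size_proots_complex)
  also have "\<dots> = (\<Sum>z\<in>set_mset (proots P). count (proots P) z)"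
    by (simp add: size_multiset_overloaded_eq)
  also have "\<dots> = (\<Sum>z\<in>{z. poly P z = 0}. order z P)"
    using assms by simp
  finally show ?thesis by simp
qed

lemma finite_pos_min:
  assumes "finite A" "\<And>x. x \<in> A \<Longrightarrow> (0::real) < h x"
  shows "\<exists>d>0. \<forall>x\<in>A. d \<le> h x"
  using assms
proof (induction A rule: finite_induct)
  case empty then show ?case by (auto intro: exI[of _ 1])
next
  case (insert a A)
  then obtain d where "d > 0" "\<forall>x\<in>A. d \<le> h x" by auto
  then show ?case using insert.prems by (intro exI[of _ "min d (h a)"]) auto
qed

lemma newton_root:
  fixes g g' :: "complex \<Rightarrow> complex" and \<rho> d :: complex and \<eta> :: real
  assumes "\<eta> > 0" "d \<noteq> 0"
    and der: "\<And>z. z \<in> cball \<rho> \<eta> \<Longrightarrow> (g has_field_derivative g' z) (at z)"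
    and dbound: "\<And>z. z \<in> cball \<rho> \<eta> \<Longrightarrow> norm (g' z - d) \<le> norm d / 2"
    and g0: "norm (g \<rho>) \<le> norm d * \<eta> / 2"
  shows "\<exists>z\<in>cball \<rho> \<eta>. g z = 0 \<and> (\<forall>w\<in>cball \<rho> \<eta>. g w = 0 \<longrightarrow> w = z)"
proof -
  define G where "G x = x - g x / d" for x
  have Gder: "(G has_field_derivative (1 - g' z / d)) (at z within cball \<rho> \<eta>)" if "z \<in> cball \<rho> \<eta>" for z
  proof -
    have "((\<lambda>x. x - g x / d) has_field_derivative (1 - g' z / d)) (at z)"
      by (rule DERIV_diff[OF DERIV_ident DERIV_cdivide[OF der[OF that]]])
    then show ?thesis unfolding G_def by (rule has_field_derivative_at_within)
  qed
  have Gdb: "norm (1 - g' z / d) \<le> 1/2" if "z \<in> cball \<rho> \<eta>" for z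
  proof -
    have "1 - g' z / d = (d - g' z) / d" using assms(2) by (simp add: field_simps)
    then have "norm (1 - g' z / d) = norm (g' z - d) / norm d" by (simp add: norm_divide norm_minus_commute)
    also have "\<dots> \<le> (norm d / 2) / norm d" using dbound[OF that] by (simp add: divide_right_mono)
    also have "\<dots> = 1/2" using assms(2) by simp
    finally show ?thesis .
  qed
  have Glip: "norm (G x - G y) \<le> 1/2 * norm (x - y)" if "x \<in> cball \<rho> \<eta>" "y \<in> cball \<rho> \<eta>" for x y
    by (rule field_differentiable_bound[OF convex_cball Gder Gdb that])
  have Gmap: "G x \<in> cball \<rho> \<eta>" if "x \<in> cball \<rho> \<eta>" for x
  proof -
    have r: "\<rho> \<in> cball \<rho> \<eta>" using assms(1) by simp
    have "norm (G \<rho> - \<rho>) = norm (g \<rho>) / norm d" by (simp add: G_def norm_divide)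
    also have "\<dots> \<le> \<eta> / 2" using g0 assms(2) by (simp add: field_simps)
    finally have 1: "norm (G \<rho> - \<rho>) \<le> \<eta> / 2" .
    have 2: "norm (G x - G \<rho>) \<le> \<eta> / 2"
      using Glip[OF that r] that by (simp add: dist_norm norm_minus_commute)
    have "norm (G x - \<rho>) \<le> norm (G x - G \<rho>) + norm (G \<rho> - \<rho>)"
      using norm_triangle_ineq[of "G x - G \<rho>" "G \<rho> - \<rho>"] by simp
    then show ?thesis using 1 2 by (simp add: dist_norm norm_minus_commute)
  qed
  define H where "H x = G (closest_point (cball \<rho> \<eta>) x)" for x
  have cp: "closest_point (cball \<rho> \<eta>) x \<in> cball \<rho> \<eta>" for x
    using assms(1) by (intro closest_point_in_set) auto
  have "\<exists>!x. H x = x"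
  proof (rule banach_fix_type[of "1/2"])
    show "\<forall>x y. dist (H x) (H y) \<le> 1/2 * dist x y"
    proof (intro allI)
      fix x y
      have "dist (H x) (H y) \<le> 1/2 * dist (closest_point (cball \<rho> \<eta>) x) (closest_point (cball \<rho> \<eta>) y)"
        using Glip[OF cp cp] by (simp add: H_def dist_norm)
      also have "\<dots> \<le> 1/2 * dist x y"
        using closest_point_lipschitz[of "cball \<rho> \<eta>" x y] assms(1) by simp
      finally show "dist (H x) (H y) \<le> 1/2 * dist x y" .
    qed
  qed auto
  then obtain x where x: "H x = x" by blast
  have xin: "x \<in> cball \<rho> \<eta>" using Gmap[OF cp] x by (metis H_def)
  then have "closest_point (cball \<rho> \<eta>) x = x" by (rule closest_point_self)
  then have "G x = x" using x by (simp add: H_def)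
  then have gx: "g x = 0" using assms(2) by (simp add: G_def)
  have uniq: "w = x" if "w \<in> cball \<rho> \<eta>" "g w = 0" for w
  proof -
    have "G w = w" using that by (simp add: G_def)
    then have "norm (w - x) \<le> 1/2 * norm (w - x)" using Glip[OF that(1) xin] \<open>G x = x\<close> by simp
    then show ?thesis by simp
  qed
  show ?thesis using xin gx uniq by blast
qed



lemma real_coeff_Y1of:
  assumes "\<And>n. coeff Y n \<in> \<real>" "a \<in> \<real>" "b \<in> \<real>"
  shows "coeff (Y1of Y a b) n \<in> \<real>"
proof -
  have E: "coeff (EE Q) k \<in> \<real>" if "\<And>n. coeff Q n \<in> \<real>" for Q k
    using that by (simp add: EE_def coeff_pderiv)
  have E1: "coeff (EE Y) k \<in> \<real>" for k using E assms(1) by blast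
  have E2: "coeff (EE (EE Y)) k \<in> \<real>" for k using E E1 by blast
  show ?thesis
    using assms E1 E2 by (cases n; cases "n - 1") (auto simp: Y1of_def)
qed

lemma deg_X_pderiv: "degree (XX * pderiv W) \<le> degree W"
proof (cases "pderiv W = 0")
  case True then show ?thesis by simp
next
  case False
  then have "degree W \<noteq> 0" by (simp add: pderiv_eq_0_iff)
  then show ?thesis using False by (simp add: degree_mult_eq degree_pderiv)
qed

lemma deg_XX_pderiv2: "degree (XX * XX * pderiv (pderiv W)) \<le> degree W"
proof (cases "pderiv (pderiv W) = 0")
  case True then show ?thesis by simp
next
  case False
  then have "degree (pderiv W) \<noteq> 0" by (simp add: pderiv_eq_0_iff)
  then have "degree W \<ge> 2" by (simp add: degree_pderiv)
  then show ?thesis using False by (simp add: degree_mult_eq degree_pderiv)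
qed

lemma disj2: "x \<notin> A \<Longrightarrow> y \<notin> A \<Longrightarrow> A \<inter> {x, y} = {}" by auto

lemma part3_core:
  fixes Yc :: "complex poly" and \<sigma> :: real
  assumes Yc0: "Yc \<noteq> 0" and realc: "\<And>n. coeff Yc n \<in> \<real>"
    and rc: "root_config Yc s t r m" and sig: "\<sigma> > 0"
  shows "\<exists>\<delta>>0. \<forall>e. e \<noteq> 0 \<longrightarrow> \<sigma> * norm e \<le> \<bar>Im e\<bar> \<longrightarrow> norm e < \<delta> \<longrightarrow>
           root_config (Y1of Yc (e + cnj e + e * cnj e) (e * cnj e)) s t (r + 2) m"
proof -
  from rc have mdef: "order 0 Yc = m" and simpleY: "\<And>z. z \<noteq> 0 \<Longrightarrow> poly Yc z = 0 \<Longrightarrow> order z Yc = 1"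
    and cs: "card {z. z \<in> \<real> \<and> Re z < 0 \<and> poly Yc z = 0} = s"
    and ct: "card {z. z \<in> \<real> \<and> Re z > 0 \<and> poly Yc z = 0} = t"
    and cr: "card {z. z \<notin> \<real> \<and> poly Yc z = 0} = r"
    unfolding root_config_def by auto
  obtain Z where YZ: "Yc = XX ^ m * Z" and ndvd: "\<not> XX dvd Z"
    using order_decomp[OF Yc0, of 0] mdef by auto
  have Z0: "Z \<noteq> 0" using YZ Yc0 by auto
  have Zat0: "poly Z 0 \<noteq> 0" using ndvd poly_eq_0_iff_dvd[of Z 0] by simp
  have polyYc: "poly Yc z = z ^ m * poly Z z" for z using YZ by (simp add: poly_power)
  have orderYc: "order z Yc = order z Z" if "z \<noteq> 0" for z
  proof -
    have "order z (XX ^ m) = 0" using that by (intro order_0I) (simp add: poly_power)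
    then show ?thesis using YZ Yc0 order_mult[of "XX^m" Z z] by simp
  qed
  define D where "D = {z. poly Z z = 0}"
  have finD: "finite D" unfolding D_def using Z0 by (rule poly_roots_finite)
  have D0: "0 \<notin> D" using Zat0 by (simp add: D_def)
  have Droot: "\<rho> \<in> D \<longleftrightarrow> \<rho> \<noteq> 0 \<and> poly Yc \<rho> = 0" for \<rho> using D0 polyYc by (auto simp: D_def)
  have ord1: "order \<rho> Z = 1" if "\<rho> \<in> D" for \<rho> using that Droot orderYc simpleY by metis
  have dZnz: "poly (pderiv Z) \<rho> \<noteq> 0" if "\<rho> \<in> D" for \<rho>
  proof
    assume h: "poly (pderiv Z) \<rho> = 0"
    have pZ: "poly Z \<rho> = 0" using that by (simp add: D_def)
    have "order \<rho> Z = Suc (order \<rho> (pderiv Z))" by (rule order_pderiv[OF Z0 pZ])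
    then have "order \<rho> (pderiv Z) = 0" using ord1[OF that] by simp
    moreover have "pderiv Z \<noteq> 0"
    proof
      assume "pderiv Z = 0"
      then have "degree Z = 0" by (simp add: pderiv_eq_0_iff)
      then obtain c where "Z = [:c:]" by (metis degree_eq_zeroE)
      then show False using pZ Z0 by simp
    qed
    ultimately show False using h order_root[of "pderiv Z" \<rho>] by simp
  qed
  have degZ: "degree Z = card D"
  proof -
    have "degree Z = (\<Sum>\<rho>\<in>D. order \<rho> Z)" unfolding D_def by (rule sum_order_degree[OF Z0, symmetric])
    also have "\<dots> = (\<Sum>\<rho>\<in>D. 1)" by (rule sum.cong[OF refl]) (simp add: ord1)
    finally show ?thesis by simp
  qed
  have Dcnj: "cnj \<rho> \<in> D" if "\<rho> \<in> D" for \<rho>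
  proof -
    have "poly Yc (cnj \<rho>) = cnj (poly Yc \<rho>)" using poly_cnj_real[of Yc \<rho>] realc by simp
    then show ?thesis using that Droot by auto
  qed

  define P\<eta> where "P\<eta> \<rho> \<eta> \<longleftrightarrow> 0 < \<eta> \<and> \<eta> < norm \<rho> \<and> (\<rho> \<notin> \<real> \<longrightarrow> \<eta> < \<bar>Im \<rho>\<bar>)
      \<and> (\<forall>\<rho>'\<in>D. \<rho>' \<noteq> \<rho> \<longrightarrow> 3 * \<eta> \<le> dist \<rho> \<rho>')
      \<and> (\<forall>z\<in>cball \<rho> \<eta>. norm (poly (pderiv Z) z - poly (pderiv Z) \<rho>) \<le> norm (poly (pderiv Z) \<rho>) / 4)" for \<rho> \<eta>
  have Pmono: "P\<eta> \<rho> \<eta>'" if "P\<eta> \<rho> \<eta>" "0 < \<eta>'" "\<eta>' \<le> \<eta>" for \<rho> \<eta> \<eta>'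
  proof -
    have "cball \<rho> \<eta>' \<subseteq> cball \<rho> \<eta>" using that(3) by auto
    then show ?thesis using that unfolding P\<eta>_def by (smt (verit) subsetD)
  qed
  have Pex: "\<exists>\<eta>. P\<eta> \<rho> \<eta>" if "\<rho> \<in> D" for \<rho>
  proof -
    obtain d1 where d1: "d1 > 0" "\<forall>x\<in>D. x \<noteq> \<rho> \<longrightarrow> d1 \<le> dist \<rho> x"
      using finite_set_avoid[OF finD] by blast
    define dd where "dd = norm (poly (pderiv Z) \<rho>) / 4"
    have dpos: "dd > 0" using dZnz[OF that] by (simp add: dd_def)
    have "isCont (poly (pderiv Z)) \<rho>" by (rule poly_isCont)
    then obtain d2 where d2: "d2 > 0" "\<forall>z. dist z \<rho> < d2 \<longrightarrow> dist (poly (pderiv Z) z) (poly (pderiv Z) \<rho>) < dd"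
      unfolding continuous_at_eps_delta using dpos by blast
    have nr: "norm \<rho> > 0" using that D0 by auto
    define im where "im = (if \<rho> \<in> \<real> then 1 else \<bar>Im \<rho>\<bar>)"
    have imp: "im > 0" by (auto simp: im_def complex_is_Real_iff)
    define \<eta> where "\<eta> = min (min (norm \<rho> / 2) (im / 2)) (min (d1 / 3) (d2 / 2))"
    have "P\<eta> \<rho> \<eta>"
      unfolding P\<eta>_def
    proof (intro conjI ballI impI)
      show "0 < \<eta>" using nr imp d1 d2 by (simp add: \<eta>_def)
      show "\<eta> < norm \<rho>" using nr by (auto simp: \<eta>_def min_less_iff_disj)
      show "\<eta> < \<bar>Im \<rho>\<bar>" if "\<rho> \<notin> \<real>" using that imp by (simp add: \<eta>_def im_def)
      show "3 * \<eta> \<le> dist \<rho> \<rho>'" if "\<rho>' \<in> D" "\<rho>' \<noteq> \<rho>" for \<rho>'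
      proof -
        have "\<eta> \<le> d1 / 3" by (simp add: \<eta>_def)
        moreover have "d1 \<le> dist \<rho> \<rho>'" using d1 that by blast
        ultimately show ?thesis by linarith
      qed
      show "norm (poly (pderiv Z) z - poly (pderiv Z) \<rho>) \<le> norm (poly (pderiv Z) \<rho>) / 4" if "z \<in> cball \<rho> \<eta>" for z
      proof -
        have "dist z \<rho> < d2" using that d2(1) by (simp add: \<eta>_def dist_commute)
        then have "dist (poly (pderiv Z) z) (poly (pderiv Z) \<rho>) < dd" using d2(2) by blast
        then show ?thesis by (simp add: dist_norm dd_def)
      qed
    qed
    then show ?thesis by blast
  qed
  obtain \<eta>0 where \<eta>0: "\<forall>\<rho>\<in>D. P\<eta> \<rho> (\<eta>0 \<rho>)" using bchoice[of D P\<eta>] Pex by blast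
  define \<eta> where "\<eta> \<rho> = min (\<eta>0 \<rho>) (\<eta>0 (cnj \<rho>))" for \<rho>
  have P\<eta>\<eta>: "P\<eta> \<rho> (\<eta> \<rho>)" if "\<rho> \<in> D" for \<rho>
  proof -
    have "P\<eta> (cnj \<rho>) (\<eta>0 (cnj \<rho>))" using \<eta>0 Dcnj[OF that] by blast
    then have "0 < \<eta>0 (cnj \<rho>)" by (simp add: P\<eta>_def)
    moreover have "0 < \<eta>0 \<rho>" using \<eta>0 that by (simp add: P\<eta>_def)
    ultimately show ?thesis using Pmono[of \<rho> "\<eta>0 \<rho>" "\<eta> \<rho>"] \<eta>0 that by (simp add: \<eta>_def)
  qed
  have \<eta>cnj: "\<eta> (cnj \<rho>) = \<eta> \<rho>" for \<rho> by (simp add: \<eta>_def min.commute)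
  have \<eta>pos: "0 < \<eta> \<rho>" and \<eta>norm: "\<eta> \<rho> < norm \<rho>" and \<eta>im: "\<rho> \<notin> \<real> \<Longrightarrow> \<eta> \<rho> < \<bar>Im \<rho>\<bar>"
    and \<eta>sep: "\<And>\<rho>'. \<rho>' \<in> D \<Longrightarrow> \<rho>' \<noteq> \<rho> \<Longrightarrow> 3 * \<eta> \<rho> \<le> dist \<rho> \<rho>'"
    and \<eta>der: "\<And>z. z \<in> cball \<rho> (\<eta> \<rho>) \<Longrightarrow> norm (poly (pderiv Z) z - poly (pderiv Z) \<rho>) \<le> norm (poly (pderiv Z) \<rho>) / 4"
    if "\<rho> \<in> D" for \<rho>
    using P\<eta>\<eta>[OF that] unfolding P\<eta>_def by blast+

  obtain R1 where R1: "R1 \<ge> 1" "\<And>z. norm z \<ge> R1 \<Longrightarrow> norm (poly Yc z) \<ge> norm (lead_coeff Yc) / 2 * norm z ^ degree Yc"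
    using poly_lower[OF Yc0] by blast
  define P1 where "P1 = XX * pderiv Yc"
  define P2 where "P2 = XX * XX * pderiv (pderiv Yc)"
  define C1 where "C1 = (\<Sum>i\<le>degree Yc. norm (coeff P1 i))"
  define C2 where "C2 = (\<Sum>i\<le>degree Yc. norm (coeff P2 i))"
  define lc where "lc = norm (lead_coeff Yc)"
  have lcpos: "lc > 0" using Yc0 by (simp add: lc_def)
  define K where "K = 2 * (C1 + C2) / lc"
  have C1nn: "C1 \<ge> 0" and C2nn: "C2 \<ge> 0" unfolding C1_def C2_def by (auto intro: sum_nonneg)
  have K0: "K \<ge> 0" using C1nn C2nn lcpos by (simp add: K_def)
  have farY: "poly Yc z \<noteq> 0 \<and> norm (z * poly (pderiv Yc) z) \<le> K * norm (poly Yc z)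
      \<and> norm (z\<^sup>2 * poly (pderiv (pderiv Yc)) z) \<le> K * norm (poly Yc z)" if z: "norm z \<ge> R1" for z
  proof -
    have z1: "norm z \<ge> 1" using z R1(1) by linarith
    have low: "norm (poly Yc z) \<ge> lc / 2 * norm z ^ degree Yc" using R1(2)[OF z] by (simp add: lc_def)
    have zp: "norm z > 0" using z1 by linarith
    have pos: "lc / 2 * norm z ^ degree Yc > 0" using lcpos zp by simp
    have u1: "norm (poly P1 z) \<le> C1 * norm z ^ degree Yc"
      unfolding C1_def P1_def by (rule poly_upper[OF deg_X_pderiv z1])
    have u2: "norm (poly P2 z) \<le> C2 * norm z ^ degree Yc"
      unfolding C2_def P2_def by (rule poly_upper[OF deg_XX_pderiv2 z1])
    have KK: "(C1 + C2) * norm z ^ degree Yc = K * (lc / 2 * norm z ^ degree Yc)"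
      using lcpos by (simp add: K_def field_simps)
    have Kl: "K * (lc / 2 * norm z ^ degree Yc) \<le> K * norm (poly Yc z)"
      using low K0 by (rule mult_left_mono)
    have e1: "z * poly (pderiv Yc) z = poly P1 z" by (simp add: P1_def)
    have e2: "z\<^sup>2 * poly (pderiv (pderiv Yc)) z = poly P2 z" by (simp add: P2_def power2_eq_square)
    have "C1 * norm z ^ degree Yc \<le> (C1 + C2) * norm z ^ degree Yc" using C2nn by (simp add: algebra_simps)
    moreover have "C2 * norm z ^ degree Yc \<le> (C1 + C2) * norm z ^ degree Yc" using C1nn by (simp add: algebra_simps)
    ultimately show ?thesis using low pos u1 u2 KK Kl unfolding e1 e2 by auto
  qed
  define R where "R = R1 + (\<Sum>\<rho>\<in>D. 2 * norm \<rho>)"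
  have RR1: "R \<ge> R1" unfolding R_def by (simp add: sum_nonneg)
  have R1': "R \<ge> 1" using RR1 R1(1) by linarith
  have Rrho: "2 * norm \<rho> \<le> R" if "\<rho> \<in> D" for \<rho>
  proof -
    have "2 * norm \<rho> \<le> (\<Sum>\<rho>\<in>D. 2 * norm \<rho>)" by (rule member_le_sum[OF that _ finD]) simp
    then show ?thesis unfolding R_def using R1(1) by linarith
  qed
  have ballR: "cball \<rho> (\<eta> \<rho>) \<subseteq> cball 0 R" if "\<rho> \<in> D" for \<rho>
  proof
    fix z assume "z \<in> cball \<rho> (\<eta> \<rho>)"
    then have "norm (z - \<rho>) \<le> \<eta> \<rho>" by (simp add: dist_norm norm_minus_commute)
    then have "norm z \<le> norm \<rho> + \<eta> \<rho>" using norm_triangle_ineq2[of z \<rho>] by linarith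
    then show "z \<in> cball 0 R" using \<eta>norm[OF that] Rrho[OF that] by simp
  qed

  define A where "A = AA m Z"
  define B where "B = BB m Z"
  obtain M1 where M1: "M1 > 0" "\<forall>z\<in>cball 0 R. norm (poly A z) \<le> M1" using poly_bound_cball by blast
  obtain M2 where M2: "M2 > 0" "\<forall>z\<in>cball 0 R. norm (poly B z) \<le> M2" using poly_bound_cball by blast
  obtain M3 where M3: "M3 > 0" "\<forall>z\<in>cball 0 R. norm (poly (pderiv A) z) \<le> M3" using poly_bound_cball by blast
  obtain M4 where M4: "M4 > 0" "\<forall>z\<in>cball 0 R. norm (poly (pderiv B) z) \<le> M4" using poly_bound_cball by blast
  define M where "M = M1 + M2 + M3 + M4"
  have Mpos: "M > 0" using M1 M2 M3 M4 by (simp add: M_def)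
  have MA: "norm (poly A z) \<le> M" "norm (poly B z) \<le> M" "norm (poly (pderiv A) z) \<le> M" "norm (poly (pderiv B) z) \<le> M"
    if "z \<in> cball 0 R" for z
  proof -
    have "norm (poly A z) \<le> M1" "norm (poly B z) \<le> M2" "norm (poly (pderiv A) z) \<le> M3"
      "norm (poly (pderiv B) z) \<le> M4" using M1 M2 M3 M4 that by blast+
    then show "norm (poly A z) \<le> M" "norm (poly B z) \<le> M" "norm (poly (pderiv A) z) \<le> M"
      "norm (poly (pderiv B) z) \<le> M" using M1 M2 M3 M4 unfolding M_def by linarith+
  qed

  define Kset where "Kset = cball 0 R - (\<Union>\<rho>\<in>D. ball \<rho> (\<eta> \<rho>))"
  have "\<exists>c0>0. \<forall>z\<in>Kset. c0 \<le> norm (poly Z z)"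
  proof (cases "Kset = {}")
    case True then show ?thesis by (auto intro: exI[of _ 1])
  next
    case False
    have "compact Kset" unfolding Kset_def by (intro compact_diff) auto
    moreover have "continuous_on Kset (\<lambda>z. norm (poly Z z))" by (intro continuous_intros)
    ultimately obtain k where k: "k \<in> Kset" "\<forall>z\<in>Kset. norm (poly Z k) \<le> norm (poly Z z)"
      using continuous_attains_inf[of Kset] False by blast
    have "poly Z k \<noteq> 0"
    proof
      assume "poly Z k = 0"
      then have "k \<in> D" by (simp add: D_def)
      then have "k \<in> ball k (\<eta> k)" using \<eta>pos by simp
      with \<open>k \<in> D\<close> k(1) show False by (auto simp: Kset_def)
    qed
    then show ?thesis using k by (intro exI[of _ "norm (poly Z k)"]) auto
  qed
  then obtain c0 where c0: "c0 > 0" "\<And>z. z \<in> Kset \<Longrightarrow> c0 \<le> norm (poly Z z)" by blast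
  obtain dZ where dZ: "dZ > 0" "\<And>\<rho>. \<rho> \<in> D \<Longrightarrow> dZ \<le> norm (poly (pderiv Z) \<rho>) * min (1/4) (\<eta> \<rho> / 2)"
    using finite_pos_min[OF finD, of "\<lambda>\<rho>. norm (poly (pderiv Z) \<rho>) * min (1/4) (\<eta> \<rho> / 2)"] dZnz \<eta>pos
    by (auto intro: mult_pos_pos)
  define mm where "mm = real m + real m ^ 2"
  have mm0: "mm \<ge> 0" by (simp add: mm_def)
  define \<delta> where "\<delta> = min (min 1 (\<sigma>\<^sup>2 / (2 * (1 + 10 * K)))) (min (c0 / (8 * M)) (min (dZ / (8 * M)) (1 / (8 * mm + 1))))"
  have \<delta>pos: "\<delta> > 0" using sig K0 c0 Mpos dZ mm0 by (simp add: \<delta>_def)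
  show ?thesis
  proof (intro exI[of _ \<delta>] conjI[OF \<delta>pos] allI impI)
    fix e :: complex
    assume e0: "e \<noteq> 0" and esig: "\<sigma> * norm e \<le> \<bar>Im e\<bar>" and eps: "norm e < \<delta>"

    define \<epsilon> where "\<epsilon> = norm e"
    define a where "a = e + cnj e + e * cnj e"
    define b where "b = e * cnj e"
    have epos: "\<epsilon> > 0" using e0 by (simp add: \<epsilon>_def)
    have eps\<delta>: "\<epsilon> < \<delta>" using eps by (simp add: \<epsilon>_def)
    have "\<delta> \<le> 1" by (simp add: \<delta>_def)
    then have e1: "\<epsilon> \<le> 1" using eps\<delta> by linarith
    have eK: "\<epsilon> * (1 + 10 * K) < \<sigma>\<^sup>2"
    proof -
      have "\<delta> \<le> \<sigma>\<^sup>2 / (2 * (1 + 10 * K))" by (simp add: \<delta>_def)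
      then have "\<epsilon> < \<sigma>\<^sup>2 / (2 * (1 + 10 * K))" using eps\<delta> by linarith
      then have "\<epsilon> * (2 * (1 + 10 * K)) < \<sigma>\<^sup>2" using K0 by (simp add: less_divide_eq)
      moreover have "\<epsilon> * (1 + 10 * K) \<le> \<epsilon> * (2 * (1 + 10 * K))" using K0 epos by (intro mult_left_mono) auto
      ultimately show ?thesis by linarith
    qed
    have ec0: "4 * \<epsilon> * M < c0"
    proof -
      have "\<delta> \<le> c0 / (8 * M)" by (simp add: \<delta>_def)
      then have "\<epsilon> < c0 / (8 * M)" using eps\<delta> by linarith
      then have h: "\<epsilon> * (8 * M) < c0" using Mpos by (simp add: less_divide_eq)
      have "4 * \<epsilon> * M = \<epsilon> * (8 * M) / 2" by (simp add: algebra_simps)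
      then show ?thesis using h c0(1) by linarith
    qed
    have edZ: "4 * \<epsilon> * M \<le> dZ"
    proof -
      have "\<delta> \<le> dZ / (8 * M)" by (simp add: \<delta>_def)
      then have "\<epsilon> < dZ / (8 * M)" using eps\<delta> by linarith
      then have h: "\<epsilon> * (8 * M) < dZ" using Mpos by (simp add: less_divide_eq)
      have "4 * \<epsilon> * M = \<epsilon> * (8 * M) / 2" by (simp add: algebra_simps)
      then show ?thesis using h dZ(1) by linarith
    qed
    have emm: "4 * \<epsilon> * mm < 1"
    proof -
      have "\<delta> \<le> 1 / (8 * mm + 1)" by (simp add: \<delta>_def)
      then have "\<epsilon> < 1 / (8 * mm + 1)" using eps\<delta> by linarith
      then have h: "\<epsilon> * (8 * mm + 1) < 1" using mm0 by (simp add: less_divide_eq)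
      have "\<epsilon> * (8 * mm + 1) / 2 = 4 * \<epsilon> * mm + \<epsilon> / 2" by (simp add: algebra_simps)
      then show ?thesis using h epos by linarith
    qed
    have ee: "\<epsilon> * \<epsilon> \<le> \<epsilon>" using e1 epos by (simp add: mult_le_cancel_left1)
    have na: "norm a \<le> 3 * \<epsilon>"
    proof -
      have "norm a \<le> norm (e + cnj e) + norm (e * cnj e)" unfolding a_def by (rule norm_triangle_ineq)
      also have "\<dots> \<le> (norm e + norm (cnj e)) + norm e * norm (cnj e)"
        by (intro add_mono norm_triangle_ineq) (simp add: norm_mult)
      finally have "norm a \<le> \<epsilon> + \<epsilon> + \<epsilon> * \<epsilon>" by (simp add: \<epsilon>_def)
      then show ?thesis using ee by linarith
    qed
    have nb: "norm b \<le> \<epsilon>" using ee by (simp add: b_def norm_mult \<epsilon>_def)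
    have areal: "a \<in> \<real>" by (simp add: a_def complex_add_cnj complex_norm_square[symmetric])
    have breal: "b \<in> \<real>" by (simp add: b_def complex_norm_square[symmetric])
    have b0: "b \<noteq> 0" using e0 by (simp add: b_def)
    define Z1 where "Z1 = Z1of m Z a b"
    define Y1 where "Y1 = Y1of Yc a b"
    have Y1Z1: "Y1 = XX ^ m * Z1" using YZ Y1of_decomp by (simp add: Y1_def Z1_def)
    have polyZ1: "poly Z1 z = poly Z z + a * poly A z + b * poly B z" for z
      by (simp add: Z1_def Z1of_def A_def B_def)
    have dZ1: "poly (pderiv Z1) z = poly (pderiv Z) z + a * poly (pderiv A) z + b * poly (pderiv B) z" for z
      by (simp add: Z1_def Z1of_def A_def B_def pderiv_add pderiv_mult pderiv_pCons pderiv_smult)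
    have pert: "norm (poly Z1 z - poly Z z) \<le> 4 * \<epsilon> * M" if "z \<in> cball 0 R" for z
    proof -
      have "poly Z1 z - poly Z z = a * poly A z + b * poly B z" by (simp add: polyZ1)
      then have "norm (poly Z1 z - poly Z z) \<le> norm a * norm (poly A z) + norm b * norm (poly B z)"
        by (metis norm_mult norm_triangle_ineq)
      also have "\<dots> \<le> (3 * \<epsilon>) * M + \<epsilon> * M"
        using MA[OF that] na nb epos by (intro add_mono mult_mono) auto
      finally show ?thesis by (simp add: algebra_simps)
    qed
    have pertd: "norm (poly (pderiv Z1) z - poly (pderiv Z) z) \<le> 4 * \<epsilon> * M" if "z \<in> cball 0 R" for z
    proof -
      have "poly (pderiv Z1) z - poly (pderiv Z) z = a * poly (pderiv A) z + b * poly (pderiv B) z" by (simp add: dZ1)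
      then have "norm (poly (pderiv Z1) z - poly (pderiv Z) z) \<le> norm a * norm (poly (pderiv A) z) + norm b * norm (poly (pderiv B) z)"
        by (metis norm_mult norm_triangle_ineq)
      also have "\<dots> \<le> (3 * \<epsilon>) * M + \<epsilon> * M"
        using MA[OF that] na nb epos by (intro add_mono mult_mono) auto
      finally show ?thesis by (simp add: algebra_simps)
    qed
    have Z1at0: "poly Z1 0 \<noteq> 0"
    proof -
      have "norm (a * of_nat m + b * (of_nat m * (of_nat m - 1))) \<le> 3 * \<epsilon> * real m + \<epsilon> * (real m * (real m + 1))"
      proof -
        have "norm (of_nat m - (1::complex)) \<le> real m + 1"
          using norm_triangle_ineq4[of "of_nat m :: complex" 1] by simp
        then have "real m * norm (of_nat m - (1::complex)) \<le> real m * (real m + 1)" by (rule mult_left_mono) simp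
        then have "norm (of_nat m * (of_nat m - (1::complex))) \<le> real m * (real m + 1)" by (simp add: norm_mult)
        then have "norm b * norm (of_nat m * (of_nat m - (1::complex))) \<le> \<epsilon> * (real m * (real m + 1))"
          by (rule mult_mono[OF nb]) (use epos in auto)
        then have n1: "norm (b * (of_nat m * (of_nat m - 1))) \<le> \<epsilon> * (real m * (real m + 1))"
          by (simp add: norm_mult)
        have "norm a * real m \<le> 3 * \<epsilon> * real m" using na by (rule mult_right_mono) simp
        then have n2: "norm (a * of_nat m) \<le> 3 * \<epsilon> * real m" by (simp add: norm_mult)
        have "norm (a * of_nat m + b * (of_nat m * (of_nat m - 1))) \<le> norm (a * of_nat m) + norm (b * (of_nat m * (of_nat m - 1)))"
          by (rule norm_triangle_ineq)
        then show ?thesis using n1 n2 by linarith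
      qed
      also have "\<dots> \<le> 4 * \<epsilon> * mm" using epos by (simp add: mm_def power2_eq_square algebra_simps)
      finally have "norm (a * of_nat m + b * (of_nat m * (of_nat m - 1))) < 1" using emm by linarith
      then have "1 + (a * of_nat m + b * (of_nat m * (of_nat m - 1))) \<noteq> 0"
      proof (intro notI)
        fix w assume n: "norm (a * of_nat m + b * (of_nat m * (of_nat m - 1))) < 1"
          and h: "1 + (a * of_nat m + b * (of_nat m * (of_nat m - 1))) = 0"
        then have "a * of_nat m + b * (of_nat m * (of_nat m - 1)) = -1" by (metis add_diff_cancel_left' diff_0)
        then show False using n by simp
      qed
      then show ?thesis using Zat0 by (simp add: Z1_def Z1of_0 add.assoc)
    qed

    have Z1ne: "Z1 \<noteq> 0" using Z1at0 by auto
    have Y1ne: "Y1 \<noteq> 0" using Y1Z1 Z1ne by simp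
    have ordY1_0: "order 0 Y1 = m"
    proof -
      have "order 0 (XX ^ m) = m" using order_power_n_n[of 0 m] by simp
      moreover have "order 0 Z1 = 0" using Z1at0 by (rule order_0I)
      ultimately show ?thesis using Y1Z1 Y1ne order_mult[of "XX ^ m" Z1 0] by simp
    qed
    have polyY1: "poly Y1 z = z ^ m * poly Z1 z" for z using Y1Z1 by (simp add: poly_power)
    have orderY1: "order z Y1 = order z Z1" if "z \<noteq> 0" for z
    proof -
      have "order z (XX ^ m) = 0" using that by (intro order_0I) (simp add: poly_power)
      then show ?thesis using Y1Z1 Y1ne order_mult[of "XX^m" Z1 z] by simp
    qed
    define W where "W = {z. poly Z1 z = 0}"
    have finW: "finite W" unfolding W_def using Z1ne by (rule poly_roots_finite)
    have W0: "w \<noteq> 0" if "w \<in> W" for w using that Z1at0 by (auto simp: W_def)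
    have Y1root: "poly Y1 z = 0 \<longleftrightarrow> z \<in> W" if "z \<noteq> 0" for z using that polyY1 by (simp add: W_def)
    have realY1: "coeff Y1 n \<in> \<real>" for n unfolding Y1_def by (rule real_coeff_Y1of[OF realc areal breal])
    have Wcnj: "cnj w \<in> W" if "w \<in> W" for w
    proof -
      have "poly Y1 w = 0" using Y1root[OF W0[OF that]] that by simp
      then have "poly Y1 (cnj w) = 0" using poly_cnj_real[of Y1 w] realY1 by simp
      moreover have "cnj w \<noteq> 0" using W0[OF that] by simp
      ultimately show ?thesis using Y1root by blast
    qed

    have dbound: "norm (poly (pderiv Z1) z - poly (pderiv Z) \<rho>) \<le> norm (poly (pderiv Z) \<rho>) / 2"
      if "\<rho> \<in> D" "z \<in> cball \<rho> (\<eta> \<rho>)" for \<rho> z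
    proof -
      have zR: "z \<in> cball 0 R" using ballR[OF that(1)] that(2) by blast
      have "dZ \<le> norm (poly (pderiv Z) \<rho>) * min (1/4) (\<eta> \<rho> / 2)" by (rule dZ(2)[OF that(1)])
      also have "\<dots> \<le> norm (poly (pderiv Z) \<rho>) * (1/4)" by (intro mult_left_mono) auto
      finally have d4: "4 * \<epsilon> * M \<le> norm (poly (pderiv Z) \<rho>) / 4" using edZ by simp
      have "norm (poly (pderiv Z1) z - poly (pderiv Z) \<rho>) \<le>
          norm (poly (pderiv Z1) z - poly (pderiv Z) z) + norm (poly (pderiv Z) z - poly (pderiv Z) \<rho>)"
        by (rule order_trans[OF _ norm_triangle_ineq]) simp
      then show ?thesis using pertd[OF zR] \<eta>der[OF that] d4 by linarith
    qed
    have Nex: "\<exists>z\<in>cball \<rho> (\<eta> \<rho>). poly Z1 z = 0 \<and> (\<forall>w\<in>cball \<rho> (\<eta> \<rho>). poly Z1 w = 0 \<longrightarrow> w = z)"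
      if "\<rho> \<in> D" for \<rho>
    proof (rule newton_root[OF \<eta>pos[OF that] dZnz[OF that]])
      show "(poly Z1 has_field_derivative poly (pderiv Z1) z) (at z)" for z by (rule poly_DERIV)
      show "norm (poly (pderiv Z1) z - poly (pderiv Z) \<rho>) \<le> norm (poly (pderiv Z) \<rho>) / 2"
        if "z \<in> cball \<rho> (\<eta> \<rho>)" for z using dbound[OF \<open>\<rho> \<in> D\<close> that] .
      have "\<rho> \<in> cball \<rho> (\<eta> \<rho>)" using \<eta>pos[OF that] by simp
      then have rR: "\<rho> \<in> cball 0 R" using ballR[OF that] by blast
      have "dZ \<le> norm (poly (pderiv Z) \<rho>) * min (1/4) (\<eta> \<rho> / 2)" by (rule dZ(2)[OF that])
      also have "\<dots> \<le> norm (poly (pderiv Z) \<rho>) * (\<eta> \<rho> / 2)" by (intro mult_left_mono) auto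
      finally have d4: "4 * \<epsilon> * M \<le> norm (poly (pderiv Z) \<rho>) * \<eta> \<rho> / 2" using edZ by simp
      have "poly Z \<rho> = 0" using that by (simp add: D_def)
      then show "norm (poly Z1 \<rho>) \<le> norm (poly (pderiv Z) \<rho>) * \<eta> \<rho> / 2"
        using pert[OF rR] d4 by simp
    qed
    obtain \<Phi> where \<Phi>: "\<forall>\<rho>\<in>D. \<Phi> \<rho> \<in> cball \<rho> (\<eta> \<rho>) \<and> poly Z1 (\<Phi> \<rho>) = 0 \<and>
        (\<forall>w\<in>cball \<rho> (\<eta> \<rho>). poly Z1 w = 0 \<longrightarrow> w = \<Phi> \<rho>)"
    proof -
      have "\<forall>\<rho>\<in>D. \<exists>z. z \<in> cball \<rho> (\<eta> \<rho>) \<and> poly Z1 z = 0 \<and>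
        (\<forall>w\<in>cball \<rho> (\<eta> \<rho>). poly Z1 w = 0 \<longrightarrow> w = z)" using Nex by blast
      then show ?thesis by (rule exE[OF bchoice]) (rule that)
    qed
    have \<Phi>in: "\<Phi> \<rho> \<in> cball \<rho> (\<eta> \<rho>)" and \<Phi>root: "poly Z1 (\<Phi> \<rho>) = 0"
      and \<Phi>uniq: "\<And>w. w \<in> cball \<rho> (\<eta> \<rho>) \<Longrightarrow> poly Z1 w = 0 \<Longrightarrow> w = \<Phi> \<rho>" if "\<rho> \<in> D" for \<rho>
      using \<Phi> that by blast+
    have \<Phi>W: "\<Phi> \<rho> \<in> W" if "\<rho> \<in> D" for \<rho> using \<Phi>root[OF that] by (simp add: W_def)
    have \<Phi>dist: "norm (\<Phi> \<rho> - \<rho>) \<le> \<eta> \<rho>" if "\<rho> \<in> D" for \<rho>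
      using \<Phi>in[OF that] by (simp add: dist_norm norm_minus_commute)
    have \<Phi>ord: "order (\<Phi> \<rho>) Z1 = 1" if "\<rho> \<in> D" for \<rho>
    proof -
      have "norm (poly (pderiv Z1) (\<Phi> \<rho>) - poly (pderiv Z) \<rho>) \<le> norm (poly (pderiv Z) \<rho>) / 2"
        by (rule dbound[OF that \<Phi>in[OF that]])
      moreover have "norm (poly (pderiv Z) \<rho>) > 0" using dZnz[OF that] by simp
      ultimately have "poly (pderiv Z1) (\<Phi> \<rho>) \<noteq> 0" by auto
      then have "order (\<Phi> \<rho>) (pderiv Z1) = 0" by (rule order_0I)
      then show ?thesis using order_pderiv[OF Z1ne \<Phi>root[OF that]] by simp
    qed
    have \<Phi>inj: "inj_on \<Phi> D"
    proof (rule inj_onI, rule ccontr)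
      fix \<rho> \<rho>' assume r: "\<rho> \<in> D" "\<rho>' \<in> D" "\<Phi> \<rho> = \<Phi> \<rho>'" "\<rho> \<noteq> \<rho>'"
      have s1: "3 * \<eta> \<rho> \<le> dist \<rho> \<rho>'" using \<eta>sep[OF r(1) r(2)] r(4) by simp
      have s2: "3 * \<eta> \<rho>' \<le> dist \<rho> \<rho>'" using \<eta>sep[OF r(2) r(1)] r(4) by (simp add: dist_commute)
      have "dist \<rho> \<rho>' \<le> norm (\<Phi> \<rho> - \<rho>) + norm (\<Phi> \<rho>' - \<rho>')"
        using r(3) norm_triangle_ineq4[of "\<Phi> \<rho> - \<rho>" "\<Phi> \<rho>' - \<rho>'"] by (simp add: dist_norm norm_minus_commute)
      then have "dist \<rho> \<rho>' \<le> \<eta> \<rho> + \<eta> \<rho>'" using \<Phi>dist[OF r(1)] \<Phi>dist[OF r(2)] by linarith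
      moreover have "dist \<rho> \<rho>' > 0" using r(4) by simp
      ultimately show False using s1 s2 by linarith
    qed
    have \<Phi>cnj: "cnj (\<Phi> \<rho>) = \<Phi> (cnj \<rho>)" if "\<rho> \<in> D" for \<rho>
    proof (rule \<Phi>uniq[OF Dcnj[OF that]])
      have "dist (cnj \<rho>) (cnj (\<Phi> \<rho>)) = dist \<rho> (\<Phi> \<rho>)"
        by (simp add: dist_norm complex_cnj_diff[symmetric] del: complex_cnj_diff)
      then show "cnj (\<Phi> \<rho>) \<in> cball (cnj \<rho>) (\<eta> (cnj \<rho>))" using \<Phi>in[OF that] by (simp add: \<eta>cnj)
      show "poly Z1 (cnj (\<Phi> \<rho>)) = 0" using Wcnj[OF \<Phi>W[OF that]] by (simp add: W_def)
    qed
    have \<Phi>real: "\<Phi> \<rho> \<in> \<real>" if "\<rho> \<in> D" "\<rho> \<in> \<real>" for \<rho>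
      using \<Phi>cnj[OF that(1)] that(2) by (simp add: Reals_cnj_iff)
    have \<Phi>nonreal: "\<Phi> \<rho> \<notin> \<real>" if "\<rho> \<in> D" "\<rho> \<notin> \<real>" for \<rho>
    proof
      assume "\<Phi> \<rho> \<in> \<real>"
      then have "Im (\<Phi> \<rho>) = 0" by (simp add: complex_is_Real_iff)
      moreover have "\<bar>Im (\<Phi> \<rho> - \<rho>)\<bar> \<le> norm (\<Phi> \<rho> - \<rho>)" by (rule abs_Im_le_cmod)
      ultimately have "\<bar>Im \<rho>\<bar> \<le> \<eta> \<rho>" using \<Phi>dist[OF that(1)] by simp
      then show False using \<eta>im[OF that] by simp
    qed
    have \<Phi>sign: "Re (\<Phi> \<rho>) < 0 \<longleftrightarrow> Re \<rho> < 0" "Re (\<Phi> \<rho>) > 0 \<longleftrightarrow> Re \<rho> > 0" if "\<rho> \<in> D" "\<rho> \<in> \<real>" for \<rho>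
    proof -
      have "norm \<rho> = \<bar>Re \<rho>\<bar>" using that(2) by (metis Reals_cases Re_complex_of_real norm_of_real)
      then have lt: "\<eta> \<rho> < \<bar>Re \<rho>\<bar>" using \<eta>norm[OF that(1)] by simp
      have "\<bar>Re (\<Phi> \<rho> - \<rho>)\<bar> \<le> norm (\<Phi> \<rho> - \<rho>)" by (rule abs_Re_le_cmod)
      then have "\<bar>Re (\<Phi> \<rho>) - Re \<rho>\<bar> \<le> \<eta> \<rho>" using \<Phi>dist[OF that(1)] by simp
      then show "Re (\<Phi> \<rho>) < 0 \<longleftrightarrow> Re \<rho> < 0" "Re (\<Phi> \<rho>) > 0 \<longleftrightarrow> Re \<rho> > 0" using lt by linarith+
    qed

    have realroots: "w \<in> \<Phi> ` D" if w: "w \<in> W" "w \<in> \<real>" for w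
    proof (cases "norm w \<ge> R")
      case True
      define tt where "tt = Re w"
      have wt: "w = complex_of_real tt" using w(2) by (simp add: tt_def)
      have "norm w \<ge> R1" using True RR1 by linarith
      then have fy: "poly Yc w \<noteq> 0" "norm (w * poly (pderiv Yc) w) \<le> K * norm (poly Yc w)"
        "norm (w\<^sup>2 * poly (pderiv (pderiv Yc)) w) \<le> K * norm (poly Yc w)" using farY by blast+
      have "norm e \<le> 1" using e1 by (simp add: \<epsilon>_def)
      moreover have "norm e * (1 + 10 * K) < \<sigma>\<^sup>2" using eK by (simp add: \<epsilon>_def)
      ultimately have "poly (Y1of Yc (e + cnj e + e * cnj e) (e * cnj e)) (complex_of_real tt) \<noteq> 0"
        using far_nonzero[of Yc tt K e \<sigma>] fy e0 sig esig K0 unfolding wt by blast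
      moreover have "poly Y1 w = 0" using Y1root[OF W0[OF w(1)]] w(1) by simp
      ultimately show ?thesis by (simp add: Y1_def a_def b_def wt)
    next
      case False
      then have wR: "w \<in> cball 0 R" by simp
      show ?thesis
      proof (cases "\<exists>\<rho>\<in>D. w \<in> ball \<rho> (\<eta> \<rho>)")
        case True
        then obtain \<rho> where "\<rho> \<in> D" "w \<in> ball \<rho> (\<eta> \<rho>)" by blast
        then have "w = \<Phi> \<rho>" using \<Phi>uniq w(1) by (auto simp: W_def)
        then show ?thesis using \<open>\<rho> \<in> D\<close> by blast
      next
        case False
        then have "w \<in> Kset" using wR by (auto simp: Kset_def)
        then have "c0 \<le> norm (poly Z w)" by (rule c0(2))
        moreover have "poly Z1 w = 0" using w(1) by (simp add: W_def)
        then have "norm (poly Z w) \<le> 4 * \<epsilon> * M" using pert[OF wR] by (simp add: norm_minus_commute)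
        ultimately show ?thesis using ec0 by linarith
      qed
    qed

    have degZ1: "degree Z1 = card D + 2"
    proof -
      have "degree Y1 = degree Yc + 2" unfolding Y1_def by (rule degree_Y1of[OF Yc0 b0])
      moreover have "degree Yc = m + degree Z" using YZ Z0 by (simp add: degree_mult_eq degree_power_eq)
      moreover have "degree Y1 = m + degree Z1" using Y1Z1 Z1ne by (simp add: degree_mult_eq degree_power_eq)
      ultimately show ?thesis using degZ by simp
    qed
    have sumW: "(\<Sum>w\<in>W. order w Z1) = card D + 2"
      unfolding W_def using sum_order_degree[OF Z1ne] degZ1 by simp
    have ordpos: "order w Z1 \<ge> 1" if "w \<in> W" for w
      using that Z1ne order_gt_0_iff[of Z1 w] by (simp add: W_def)
    have PhiDW: "\<Phi> ` D \<subseteq> W" using \<Phi>W by blast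
    have sumPhi: "(\<Sum>w\<in>\<Phi> ` D. order w Z1) = card D"
    proof -
      have "(\<Sum>w\<in>\<Phi> ` D. order w Z1) = (\<Sum>\<rho>\<in>D. order (\<Phi> \<rho>) Z1)" by (rule sum.reindex[OF \<Phi>inj, unfolded comp_def])
      also have "\<dots> = (\<Sum>\<rho>\<in>D. 1)" by (rule sum.cong[OF refl]) (simp add: \<Phi>ord)
      finally show ?thesis by simp
    qed
    define Rest where "Rest = W - \<Phi> ` D"
    have finRest: "finite Rest" using finW by (simp add: Rest_def)
    have sumRest: "(\<Sum>w\<in>Rest. order w Z1) = 2"
      using sum.subset_diff[OF PhiDW finW, of "\<lambda>w. order w Z1"] sumW sumPhi by (simp add: Rest_def)
    obtain w where wR: "w \<in> Rest" using sumRest by fastforce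
    have wW: "w \<in> W" and wnD: "w \<notin> \<Phi> ` D" using wR by (auto simp: Rest_def)
    have wnr: "w \<notin> \<real>" using realroots wW wnD by blast
    have cwW: "cnj w \<in> W" using Wcnj[OF wW] .
    have cwnD: "cnj w \<notin> \<Phi> ` D"
    proof
      assume "cnj w \<in> \<Phi> ` D"
      then obtain \<rho> where "\<rho> \<in> D" "cnj w = \<Phi> \<rho>" by blast
      then have "w = \<Phi> (cnj \<rho>)" using \<Phi>cnj by (metis complex_cnj_cnj)
      then show False using wnD Dcnj[OF \<open>\<rho> \<in> D\<close>] by blast
    qed
    have cwR: "cnj w \<in> Rest" using cwW cwnD by (simp add: Rest_def)
    have wcw: "cnj w \<noteq> w" using wnr by (simp add: Reals_cnj_iff)
    have cwnr: "cnj w \<notin> \<real>" using wnr by (simp add: Reals_cnj_iff)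
    define Rest' where "Rest' = Rest - {w} - {cnj w}"
    have "(\<Sum>x\<in>Rest. order x Z1) = order w Z1 + order (cnj w) Z1 + (\<Sum>x\<in>Rest'. order x Z1)"
    proof -
      have "(\<Sum>x\<in>Rest. order x Z1) = order w Z1 + (\<Sum>x\<in>Rest - {w}. order x Z1)"
        by (rule sum.remove[OF finRest wR])
      also have "(\<Sum>x\<in>Rest - {w}. order x Z1) = order (cnj w) Z1 + (\<Sum>x\<in>Rest'. order x Z1)"
        unfolding Rest'_def using finRest cwR wcw by (intro sum.remove) auto
      finally show ?thesis by simp
    qed
    moreover have "card Rest' \<le> (\<Sum>x\<in>Rest'. order x Z1)"
    proof -
      have "(\<Sum>x\<in>Rest'. (1::nat)) \<le> (\<Sum>x\<in>Rest'. order x Z1)"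
        by (rule sum_mono) (use ordpos in \<open>auto simp: Rest'_def Rest_def\<close>)
      then show ?thesis by simp
    qed
    moreover have "order w Z1 \<ge> 1" "order (cnj w) Z1 \<ge> 1" using ordpos wW cwW by auto
    ultimately have ow: "order w Z1 = 1" and ocw: "order (cnj w) Z1 = 1" and cR': "card Rest' = 0"
      using sumRest by linarith+
    have "Rest' = {}" using cR' finRest by (simp add: Rest'_def)
    then have RestEq: "Rest = {w, cnj w}" using wR cwR by (auto simp: Rest'_def)
    have Wsplit: "x \<in> W \<longleftrightarrow> x \<in> \<Phi> ` D \<or> x = w \<or> x = cnj w" for x
      using RestEq PhiDW by (auto simp: Rest_def)

    have Y1r: "poly Y1 z = 0 \<longleftrightarrow> z \<in> W" if "z \<noteq> 0" for z using Y1root[OF that] .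
    have Dreal: "\<rho> \<in> D \<longleftrightarrow> \<rho> \<noteq> 0 \<and> poly Yc \<rho> = 0" for \<rho> by (rule Droot)
    have setneg: "{z. z \<in> \<real> \<and> Re z < 0 \<and> poly Y1 z = 0} = \<Phi> ` {z. z \<in> \<real> \<and> Re z < 0 \<and> poly Yc z = 0}"
    proof (intro equalityI subsetI)
      fix z assume "z \<in> {z. z \<in> \<real> \<and> Re z < 0 \<and> poly Y1 z = 0}"
      then have z: "z \<in> \<real>" "Re z < 0" "poly Y1 z = 0" by auto
      then have z0: "z \<noteq> 0" by auto
      then have "z \<in> W" using z Y1r by blast
      then obtain \<rho> where r: "\<rho> \<in> D" "z = \<Phi> \<rho>" using realroots z(1) by blast
      have rr: "\<rho> \<in> \<real>" using \<Phi>nonreal[OF r(1)] r(2) z(1) by blast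
      have "Re \<rho> < 0" using \<Phi>sign(1)[OF r(1) rr] r(2) z(2) by simp
      moreover have "poly Yc \<rho> = 0" using r(1) Droot by blast
      ultimately have "\<rho> \<in> {z. z \<in> \<real> \<and> Re z < 0 \<and> poly Yc z = 0}" using rr by blast
      then show "z \<in> \<Phi> ` {z. z \<in> \<real> \<and> Re z < 0 \<and> poly Yc z = 0}" by (rule image_eqI[where f = \<Phi>, OF r(2)])
    next
      fix z assume "z \<in> \<Phi> ` {z. z \<in> \<real> \<and> Re z < 0 \<and> poly Yc z = 0}"
      then obtain \<rho> where r: "\<rho> \<in> \<real>" "Re \<rho> < 0" "poly Yc \<rho> = 0" "z = \<Phi> \<rho>" by blast
      have "\<rho> \<noteq> 0" using r(2) by auto
      then have rD: "\<rho> \<in> D" using r(3) Droot by blast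
      have "Re z < 0" using \<Phi>sign(1)[OF rD r(1)] r by simp
      moreover have "z \<in> \<real>" using \<Phi>real[OF rD r(1)] r by simp
      moreover have "z \<noteq> 0" using \<open>Re z < 0\<close> by auto
      then have "poly Y1 z = 0" using Y1r \<Phi>W[OF rD] r(4) by simp
      ultimately show "z \<in> {z. z \<in> \<real> \<and> Re z < 0 \<and> poly Y1 z = 0}" by simp
    qed
    have setpos: "{z. z \<in> \<real> \<and> Re z > 0 \<and> poly Y1 z = 0} = \<Phi> ` {z. z \<in> \<real> \<and> Re z > 0 \<and> poly Yc z = 0}"
    proof (intro equalityI subsetI)
      fix z assume "z \<in> {z. z \<in> \<real> \<and> Re z > 0 \<and> poly Y1 z = 0}"
      then have z: "z \<in> \<real>" "Re z > 0" "poly Y1 z = 0" by auto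
      then have z0: "z \<noteq> 0" by auto
      then have "z \<in> W" using z Y1r by blast
      then obtain \<rho> where r: "\<rho> \<in> D" "z = \<Phi> \<rho>" using realroots z(1) by blast
      have rr: "\<rho> \<in> \<real>" using \<Phi>nonreal[OF r(1)] r(2) z(1) by blast
      have "Re \<rho> > 0" using \<Phi>sign(2)[OF r(1) rr] r(2) z(2) by simp
      moreover have "poly Yc \<rho> = 0" using r(1) Droot by blast
      ultimately have "\<rho> \<in> {z. z \<in> \<real> \<and> Re z > 0 \<and> poly Yc z = 0}" using rr by blast
      then show "z \<in> \<Phi> ` {z. z \<in> \<real> \<and> Re z > 0 \<and> poly Yc z = 0}" by (rule image_eqI[where f = \<Phi>, OF r(2)])
    next
      fix z assume "z \<in> \<Phi> ` {z. z \<in> \<real> \<and> Re z > 0 \<and> poly Yc z = 0}"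
      then obtain \<rho> where r: "\<rho> \<in> \<real>" "Re \<rho> > 0" "poly Yc \<rho> = 0" "z = \<Phi> \<rho>" by blast
      have "\<rho> \<noteq> 0" using r(2) by auto
      then have rD: "\<rho> \<in> D" using r(3) Droot by blast
      have "Re z > 0" using \<Phi>sign(2)[OF rD r(1)] r by simp
      moreover have "z \<in> \<real>" using \<Phi>real[OF rD r(1)] r by simp
      moreover have "z \<noteq> 0" using \<open>Re z > 0\<close> by auto
      then have "poly Y1 z = 0" using Y1r \<Phi>W[OF rD] r(4) by simp
      ultimately show "z \<in> {z. z \<in> \<real> \<and> Re z > 0 \<and> poly Y1 z = 0}" by simp
    qed
    have setnr: "{z. z \<notin> \<real> \<and> poly Y1 z = 0} = \<Phi> ` {z. z \<notin> \<real> \<and> poly Yc z = 0} \<union> {w, cnj w}"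
    proof (intro equalityI subsetI)
      fix z assume "z \<in> {z. z \<notin> \<real> \<and> poly Y1 z = 0}"
      then have z: "z \<notin> \<real>" "poly Y1 z = 0" by auto
      then have z0: "z \<noteq> 0" by auto
      then have "z \<in> W" using z Y1r by blast
      then consider "z \<in> \<Phi> ` D" | "z = w" | "z = cnj w" using Wsplit by blast
      then show "z \<in> \<Phi> ` {z. z \<notin> \<real> \<and> poly Yc z = 0} \<union> {w, cnj w}"
      proof cases
        case 1
        then obtain \<rho> where r: "\<rho> \<in> D" "z = \<Phi> \<rho>" by blast
        have "\<rho> \<notin> \<real>" using \<Phi>real[OF r(1)] r(2) z(1) by blast
        moreover have "poly Yc \<rho> = 0" using r(1) Droot by blast
        ultimately have "\<rho> \<in> {z. z \<notin> \<real> \<and> poly Yc z = 0}" by blast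
        then show ?thesis using r(2) by blast
      qed auto
    next
      fix z assume "z \<in> \<Phi> ` {z. z \<notin> \<real> \<and> poly Yc z = 0} \<union> {w, cnj w}"
      then consider \<rho> where "\<rho> \<notin> \<real>" "poly Yc \<rho> = 0" "z = \<Phi> \<rho>" | "z = w" | "z = cnj w" by blast
      then show "z \<in> {z. z \<notin> \<real> \<and> poly Y1 z = 0}"
      proof cases
        case 1
        have "\<rho> \<noteq> 0" using 1 by auto
        then have rD: "\<rho> \<in> D" using 1 Droot by blast
        have "z \<notin> \<real>" using \<Phi>nonreal[OF rD] 1 by simp
        moreover have "z \<noteq> 0" using \<open>z \<notin> \<real>\<close> by auto
        then have "poly Y1 z = 0" using Y1r[of z] \<Phi>W[OF rD] 1 by simp
        ultimately show ?thesis by simp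
      next
        case 2 then show ?thesis using wnr wW Y1r[OF W0[OF wW]] by auto
      next
        case 3 then show ?thesis using cwnr cwW Y1r[OF W0[OF cwW]] by auto
      qed
    qed
    have DnD: "{z. z \<in> \<real> \<and> Re z < 0 \<and> poly Yc z = 0} \<subseteq> D"
    proof (rule subsetI)
      fix z assume "z \<in> {z. z \<in> \<real> \<and> Re z < 0 \<and> poly Yc z = 0}"
      then have "z \<noteq> 0" "poly Yc z = 0" by auto
      then show "z \<in> D" using Droot by blast
    qed
    have DpD: "{z. z \<in> \<real> \<and> Re z > 0 \<and> poly Yc z = 0} \<subseteq> D"
    proof (rule subsetI)
      fix z assume "z \<in> {z. z \<in> \<real> \<and> Re z > 0 \<and> poly Yc z = 0}"
      then have "z \<noteq> 0" "poly Yc z = 0" by auto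
      then show "z \<in> D" using Droot by blast
    qed
    have DcD: "{z. z \<notin> \<real> \<and> poly Yc z = 0} \<subseteq> D"
    proof (rule subsetI)
      fix z assume "z \<in> {z. z \<notin> \<real> \<and> poly Yc z = 0}"
      then have "z \<noteq> 0" "poly Yc z = 0" by auto
      then show "z \<in> D" using Droot by blast
    qed
    have card_neg: "card {z. z \<in> \<real> \<and> Re z < 0 \<and> poly Y1 z = 0} = s"
      unfolding setneg using card_image[OF inj_on_subset[OF \<Phi>inj DnD]] cs by simp
    have card_pos: "card {z. z \<in> \<real> \<and> Re z > 0 \<and> poly Y1 z = 0} = t"
      unfolding setpos using card_image[OF inj_on_subset[OF \<Phi>inj DpD]] ct by simp
    have card_nr: "card {z. z \<notin> \<real> \<and> poly Y1 z = 0} = r + 2"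
    proof -
      have fin1: "finite (\<Phi> ` {z. z \<notin> \<real> \<and> poly Yc z = 0})" using finite_subset[OF DcD finD] by simp
      have disj: "\<Phi> ` {z. z \<notin> \<real> \<and> poly Yc z = 0} \<inter> {w, cnj w} = {}"
      proof -
        have "\<Phi> ` {z. z \<notin> \<real> \<and> poly Yc z = 0} \<subseteq> \<Phi> ` D" by (rule image_mono[OF DcD])
        then have "w \<notin> \<Phi> ` {z. z \<notin> \<real> \<and> poly Yc z = 0}" "cnj w \<notin> \<Phi> ` {z. z \<notin> \<real> \<and> poly Yc z = 0}"
          using wnD cwnD by (meson subsetD)+
        then show ?thesis by (rule disj2)
      qed
      have "card (\<Phi> ` {z. z \<notin> \<real> \<and> poly Yc z = 0} \<union> {w, cnj w}) = card (\<Phi> ` {z. z \<notin> \<real> \<and> poly Yc z = 0}) + card {w, cnj w}"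
        by (rule card_Un_disjoint[OF fin1 _ disj]) simp
      also have "card (\<Phi> ` {z. z \<notin> \<real> \<and> poly Yc z = 0}) = r"
        using card_image[OF inj_on_subset[OF \<Phi>inj DcD]] cr by simp
      also have "card {w, cnj w} = 2" using wcw by simp
      finally show ?thesis unfolding setnr .
    qed
    have simple: "\<forall>z. z \<noteq> 0 \<and> poly Y1 z = 0 \<longrightarrow> order z Y1 = 1"
    proof (intro allI impI)
      fix z assume z: "z \<noteq> 0 \<and> poly Y1 z = 0"
      then have "z \<in> W" using Y1r by blast
      then consider "z \<in> \<Phi> ` D" | "z = w" | "z = cnj w" using Wsplit by blast
      then have "order z Z1 = 1"
      proof cases
        case 1
        then obtain \<rho> where "\<rho> \<in> D" "z = \<Phi> \<rho>" by blast
        then show ?thesis using \<Phi>ord by simp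
      next
        case 2 then show ?thesis using ow by simp
      next
        case 3 then show ?thesis using ocw by simp
      qed
      then show "order z Y1 = 1" using orderY1 z by simp
    qed
    have "root_config Y1 s t (r + 2) m"
      unfolding root_config_def using Y1ne card_neg card_pos card_nr simple ordY1_0 by blast
    then show "root_config (Y1of Yc (e + cnj e + e * cnj e) (e * cnj e)) s t (r + 2) m"
      by (simp add: Y1_def a_def b_def)
  qed
qed

theorem lemma5p2:
  fixes \<alpha> \<beta> :: real and S :: "complex set"
  assumes S_def: "S = open_sector \<alpha> \<beta>"
    and ab: "\<alpha> < \<beta>"
    and clos: "closure S \<inter> \<real> = {0}"
  shows
    "(\<forall>e\<in>S. ssc (\<lambda>x. exp x * (1 + e * x)) (\<lambda>x. exp x * (1 + cnj e * x))
               = (\<lambda>x. exp x * poly (Vpoly e) x))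
     \<and> (\<forall>e\<in>S. \<forall>(Y::complex poly) p. Y \<noteq> 0 \<and> degree Y = p \<longrightarrow>
          (\<exists>Y1. ssc (\<lambda>x. exp x * poly Y x) (\<lambda>x. exp x * poly (Vpoly e) x)
                  = (\<lambda>x. exp x * poly Y1 x) \<and> degree Y1 = p + 2))
     \<and> (\<forall>(Y::real poly) p s t r. Y \<noteq> 0 \<and> degree Y = p \<and>
          root_config (map_poly complex_of_real Y) s t r (p - s - t - r) \<longrightarrow>
          (\<exists>\<delta>>0. \<forall>e\<in>S. norm e < \<delta> \<longrightarrow>
             (\<forall>Y1. ssc (\<lambda>x. exp x * poly (map_poly complex_of_real Y) x)
                       (\<lambda>x. exp x * poly (Vpoly e) x) = (\<lambda>x. exp x * poly Y1 x) \<longrightarrow>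
                    root_config Y1 s t (r + 2) (p - s - t - r))))"
proof -
  obtain \<sigma> where \<sigma>: "\<sigma> > 0" "\<forall>e\<in>S. e \<noteq> 0 \<and> \<sigma> * norm e \<le> \<bar>Im e\<bar>"
    using sector_bound[OF S_def ab clos] by blast
  have p1: "\<forall>e\<in>S. ssc (\<lambda>x. exp x * (1 + e * x)) (\<lambda>x. exp x * (1 + cnj e * x))
               = (\<lambda>x. exp x * poly (Vpoly e) x)" using part1 by blast
  have p2: "\<forall>e\<in>S. \<forall>(Y::complex poly) p. Y \<noteq> 0 \<and> degree Y = p \<longrightarrow>
          (\<exists>Y1. ssc (\<lambda>x. exp x * poly Y x) (\<lambda>x. exp x * poly (Vpoly e) x)
                  = (\<lambda>x. exp x * poly Y1 x) \<and> degree Y1 = p + 2)"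
  proof (intro ballI allI impI)
    fix e Y p assume e: "e \<in> S" and Y: "(Y::complex poly) \<noteq> 0 \<and> degree Y = p"
    have "e * cnj e \<noteq> 0" using \<sigma>(2) e by auto
    then have "degree (Y1of Y (e + cnj e + e * cnj e) (e * cnj e)) = p + 2"
      using degree_Y1of[of Y "e * cnj e"] Y by simp
    then show "\<exists>Y1. ssc (\<lambda>x. exp x * poly Y x) (\<lambda>x. exp x * poly (Vpoly e) x)
                  = (\<lambda>x. exp x * poly Y1 x) \<and> degree Y1 = p + 2"
      using ssc_V[of Y e] by blast
  qed
  have p3: "\<forall>(Y::real poly) p s t r. Y \<noteq> 0 \<and> degree Y = p \<and>
          root_config (map_poly complex_of_real Y) s t r (p - s - t - r) \<longrightarrow>
          (\<exists>\<delta>>0. \<forall>e\<in>S. norm e < \<delta> \<longrightarrow>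
             (\<forall>Y1. ssc (\<lambda>x. exp x * poly (map_poly complex_of_real Y) x)
                       (\<lambda>x. exp x * poly (Vpoly e) x) = (\<lambda>x. exp x * poly Y1 x) \<longrightarrow>
                    root_config Y1 s t (r + 2) (p - s - t - r)))"
  proof (intro allI impI)
    fix Y :: "real poly" and p s t r
    assume h: "Y \<noteq> 0 \<and> degree Y = p \<and> root_config (map_poly complex_of_real Y) s t r (p - s - t - r)"
    define Yc where "Yc = map_poly complex_of_real Y"
    have Yc0: "Yc \<noteq> 0" using h by (simp add: Yc_def root_config_def)
    have realc: "coeff Yc n \<in> \<real>" for n by (simp add: Yc_def coeff_map_poly)
    have rc: "root_config Yc s t r (p - s - t - r)" using h by (simp add: Yc_def)
    obtain \<delta> where \<delta>: "\<delta> > 0" "\<forall>e. e \<noteq> 0 \<longrightarrow> \<sigma> * norm e \<le> \<bar>Im e\<bar> \<longrightarrow> norm e < \<delta> \<longrightarrow>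
           root_config (Y1of Yc (e + cnj e + e * cnj e) (e * cnj e)) s t (r + 2) (p - s - t - r)"
      using part3_core[OF Yc0 realc rc \<sigma>(1)] by blast
    show "\<exists>\<delta>>0. \<forall>e\<in>S. norm e < \<delta> \<longrightarrow>
             (\<forall>Y1. ssc (\<lambda>x. exp x * poly (map_poly complex_of_real Y) x)
                       (\<lambda>x. exp x * poly (Vpoly e) x) = (\<lambda>x. exp x * poly Y1 x) \<longrightarrow>
                    root_config Y1 s t (r + 2) (p - s - t - r))"
    proof (intro exI[of _ \<delta>] conjI[OF \<delta>(1)] ballI impI allI)
      fix e Y1 assume e: "e \<in> S" and ne: "norm e < \<delta>"
        and eq: "ssc (\<lambda>x. exp x * poly (map_poly complex_of_real Y) x)
                       (\<lambda>x. exp x * poly (Vpoly e) x) = (\<lambda>x. exp x * poly Y1 x)"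
      have "(\<lambda>x. exp x * poly Y1 x) = (\<lambda>x. exp x * poly (Y1of Yc (e + cnj e + e * cnj e) (e * cnj e)) x)"
        using eq ssc_V[of Yc e] by (simp add: Yc_def)
      then have "poly Y1 x = poly (Y1of Yc (e + cnj e + e * cnj e) (e * cnj e)) x" for x
        by (metis exp_not_eq_zero mult_cancel_left)
      then have "Y1 = Y1of Yc (e + cnj e + e * cnj e) (e * cnj e)" by (simp add: poly_eq_poly_eq_iff[symmetric] fun_eq_iff)
      then show "root_config Y1 s t (r + 2) (p - s - t - r)" using \<delta>(2) \<sigma>(2) e ne by auto
    qed
  qed
  show ?thesis using p1 p2 p3 by blast
qed


end
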